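(* Let $(W,S)$ be a Coxeter system of rank $n$ with set of reflections $T$, $(s_1,\dots,s_n)$ an ordering of $S$, $h=s_1\cdots s_n$, and let $\Psi:\mathrm{Art}(W,S)\to\mathrm{Art}^*(W,T,h)$ be the group morphism with $\bar s_i\mapsto\{s_i\}$. If $\Psi$ is an isomorphism, then $(W,(s_1,\dots,s_n))$ is well-stabilized.
   Context: A Coxeter system $(W,S)$: $W=\langle S\mid (ss')^{m(s,s')}=1\text{ whenever } m(s,s')\neq\infty\rangle$ with $m$ symmetric, $m(s,s)=1$, $m(s,s')\in\{2,3,\dots,\infty\}$ for $s\neq s'$; $T$ is the set of conjugates of elements of $S$. For $a\in W$: $\ell_T(a)$ is the minimal $k$ with $a=t_1\cdots t_k$, $t_i\in T$; $\mathrm{Red}_T(a)$ is the set of such tuples of length $\ell_T(a)$; $a\le_T b$ iff $\ell_T(a)+\ell_T(a^{-1}b)=\ell_T(b)$; $[1,h]_T=\{a:a\le_T h\}$. $\mathrm{Art}(W,S)$ is generated by $\bar s_1,\dots,\bar s_n$ subject to $\bar s_i\bar s_j\bar s_i\cdots=\bar s_j\bar s_i\bar s_j\cdots$ (each side with $m(s_i,s_j)$ factors) for $i<j$ with $m(s_i,s_j)\neq\infty$. $\mathrm{Art}^*(W,T,h)$ is generated by symbols $\{t\}$, $t\in T\cap[1,h]_T$, subject to $\{t_1\}\cdots\{t_k\}=\{t'_1\}\cdots\{t'_k\}$ for all $a\in[1,h]_T$ and $(t_1,\dots,t_k),(t'_1,\dots,t'_k)\in\mathrm{Red}_T(a)$;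 $\Psi$ is a well-defined morphism. The braid group $B_n$ acts on $G^n$ by the Hurwitz action $\sigma_i\cdot(g_1,\dots,g_n)=(g_1,\dots,g_{i-1},g_ig_{i+1}g_i^{-1},g_i,g_{i+2},\dots,g_n)$. $(W,(s_1,\dots,s_n))$ is well-stabilized if the stabilizer in $B_n$ of $(s_1,\dots,s_n)\in W^n$ equals the stabilizer of $(\bar s_1,\dots,\bar s_n)\in\mathrm{Art}(W,S)^n$. *)

theory Defs
  imports "HOL-Algebra.Group" "HOL-Library.Extended_Nat"
begin

text \<open>Words over a generating set: a letter (a, True) is the generator a,
  (a, False) is its inverse.\<close>

inductive pres_rel :: "'a set \<Rightarrow> ('a \<times> bool) list set \<Rightarrow> ('a \<times> bool) list \<Rightarrow> ('a \<times> bool) list \<Rightarrow> bool"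
  for X R where
  pr_refl: "pres_rel X R w w"
| pr_sym: "pres_rel X R u v \<Longrightarrow> pres_rel X R v u"
| pr_trans: "pres_rel X R u v \<Longrightarrow> pres_rel X R v w \<Longrightarrow> pres_rel X R u w"
| pr_cancel: "a \<in> X \<Longrightarrow> pres_rel X R (u @ [(a, b), (a, \<not> b)] @ v) (u @ v)"
| pr_relator: "r \<in> R \<Longrightarrow> pres_rel X R (u @ r @ v) (u @ v)"

definition pres_class :: "'a set \<Rightarrow> ('a \<times> bool) list set \<Rightarrow> ('a \<times> bool) list \<Rightarrow> ('a \<times> bool) list set" where
  "pres_class X R w = {v. pres_rel X R w v}"

definition presented_group :: "'a set \<Rightarrow> ('a \<times> bool) list set \<Rightarrow> ('a \<times> bool) list set monoid" where
  "presented_group X R =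
     \<lparr>carrier = {pres_class X R w | w. set w \<subseteq> X \<times> UNIV},
      mult = (\<lambda>A B. {w. \<exists>u\<in>A. \<exists>v\<in>B. pres_rel X R (u @ v) w}),
      one = pres_class X R []\<rparr>"

definition pres_gen :: "'a set \<Rightarrow> ('a \<times> bool) list set \<Rightarrow> 'a \<Rightarrow> ('a \<times> bool) list set" where
  "pres_gen X R a = pres_class X R [(a, True)]"

definition word_inv :: "('a \<times> bool) list \<Rightarrow> ('a \<times> bool) list" where
  "word_inv w = rev (map (\<lambda>(a, b). (a, \<not> b)) w)"

definition pos_word :: "'a list \<Rightarrow> ('a \<times> bool) list" where
  "pos_word xs = map (\<lambda>a. (a, True)) xs"

definition eq_relator :: "('a \<times> bool) list \<Rightarrow> ('a \<times> bool) list \<Rightarrow> ('a \<times> bool) list" where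
  "eq_relator u v = u @ word_inv v"

definition coxeter_matrix :: "nat \<Rightarrow> (nat \<Rightarrow> nat \<Rightarrow> enat) \<Rightarrow> bool" where
  "coxeter_matrix n M \<longleftrightarrow>
     (\<forall>i<n. M i i = 1) \<and> (\<forall>i<n. \<forall>j<n. M i j = M j i) \<and> (\<forall>i<n. \<forall>j<n. i \<noteq> j \<longrightarrow> 2 \<le> M i j)"

definition coxeter_relators :: "nat \<Rightarrow> (nat \<Rightarrow> nat \<Rightarrow> enat) \<Rightarrow> (nat \<times> bool) list set" where
  "coxeter_relators n M =
     {concat (replicate k [(i, True), (j, True)]) | i j k. i < n \<and> j < n \<and> M i j = enat k}"

definition coxeter_group :: "nat \<Rightarrow> (nat \<Rightarrow> nat \<Rightarrow> enat) \<Rightarrow> (nat \<times> bool) list set monoid" where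
  "coxeter_group n M = presented_group {..<n} (coxeter_relators n M)"

definition cox_gen :: "nat \<Rightarrow> (nat \<Rightarrow> nat \<Rightarrow> enat) \<Rightarrow> nat \<Rightarrow> (nat \<times> bool) list set" where
  "cox_gen n M i = pres_gen {..<n} (coxeter_relators n M) i"

definition cox_S :: "nat \<Rightarrow> (nat \<Rightarrow> nat \<Rightarrow> enat) \<Rightarrow> (nat \<times> bool) list set set" where
  "cox_S n M = cox_gen n M ` {..<n}"

definition cox_T :: "nat \<Rightarrow> (nat \<Rightarrow> nat \<Rightarrow> enat) \<Rightarrow> (nat \<times> bool) list set set" where
  "cox_T n M = {g \<otimes>\<^bsub>coxeter_group n M\<^esub> s \<otimes>\<^bsub>coxeter_group n M\<^esub> inv\<^bsub>coxeter_group n M\<^esub> g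
                 | g s. g \<in> carrier (coxeter_group n M) \<and> s \<in> cox_S n M}"

definition cox_prod :: "nat \<Rightarrow> (nat \<Rightarrow> nat \<Rightarrow> enat) \<Rightarrow> (nat \<times> bool) list set list \<Rightarrow> (nat \<times> bool) list set" where
  "cox_prod n M ts = foldr (\<lambda>x y. x \<otimes>\<^bsub>coxeter_group n M\<^esub> y) ts \<one>\<^bsub>coxeter_group n M\<^esub>"

definition refl_length :: "nat \<Rightarrow> (nat \<Rightarrow> nat \<Rightarrow> enat) \<Rightarrow> (nat \<times> bool) list set \<Rightarrow> nat" where
  "refl_length n M a = (LEAST k. \<exists>ts. set ts \<subseteq> cox_T n M \<and> length ts = k \<and> cox_prod n M ts = a)"

definition red_T :: "nat \<Rightarrow> (nat \<Rightarrow> nat \<Rightarrow> enat) \<Rightarrow> (nat \<times> bool) list set \<Rightarrow> (nat \<times> bool) list set list set" where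
  "red_T n M a = {ts. set ts \<subseteq> cox_T n M \<and> length ts = refl_length n M a \<and> cox_prod n M ts = a}"

definition T_le :: "nat \<Rightarrow> (nat \<Rightarrow> nat \<Rightarrow> enat) \<Rightarrow> (nat \<times> bool) list set \<Rightarrow> (nat \<times> bool) list set \<Rightarrow> bool" where
  "T_le n M a b \<longleftrightarrow>
     refl_length n M a + refl_length n M (inv\<^bsub>coxeter_group n M\<^esub> a \<otimes>\<^bsub>coxeter_group n M\<^esub> b) = refl_length n M b"

definition cox_elem :: "nat \<Rightarrow> (nat \<Rightarrow> nat \<Rightarrow> enat) \<Rightarrow> (nat \<times> bool) list set" where
  "cox_elem n M = cox_prod n M (map (cox_gen n M) [0..<n])"

definition nc_interval :: "nat \<Rightarrow> (nat \<Rightarrow> nat \<Rightarrow> enat) \<Rightarrow> (nat \<times> bool) list set set" where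
  "nc_interval n M = {a \<in> carrier (coxeter_group n M). T_le n M a (cox_elem n M)}"

definition alt_word :: "nat \<Rightarrow> nat \<Rightarrow> nat \<Rightarrow> nat list" where
  "alt_word i j k = map (\<lambda>l. if even l then i else j) [0..<k]"

definition artin_relators :: "nat \<Rightarrow> (nat \<Rightarrow> nat \<Rightarrow> enat) \<Rightarrow> (nat \<times> bool) list set" where
  "artin_relators n M =
     {eq_relator (pos_word (alt_word i j k)) (pos_word (alt_word j i k)) | i j k. i < j \<and> j < n \<and> M i j = enat k}"

definition artin_group :: "nat \<Rightarrow> (nat \<Rightarrow> nat \<Rightarrow> enat) \<Rightarrow> (nat \<times> bool) list set monoid" where
  "artin_group n M = presented_group {..<n} (artin_relators n M)"

definition art_gen :: "nat \<Rightarrow> (nat \<Rightarrow> nat \<Rightarrow> enat) \<Rightarrow> nat \<Rightarrow> (nat \<times> bool) list set" where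
  "art_gen n M i = pres_gen {..<n} (artin_relators n M) i"

definition dual_gens :: "nat \<Rightarrow> (nat \<Rightarrow> nat \<Rightarrow> enat) \<Rightarrow> (nat \<times> bool) list set set" where
  "dual_gens n M = cox_T n M \<inter> nc_interval n M"

definition dual_relators :: "nat \<Rightarrow> (nat \<Rightarrow> nat \<Rightarrow> enat) \<Rightarrow> ((nat \<times> bool) list set \<times> bool) list set" where
  "dual_relators n M =
     {eq_relator (pos_word ts) (pos_word ts') | a ts ts'.
        a \<in> nc_interval n M \<and> ts \<in> red_T n M a \<and> ts' \<in> red_T n M a}"

definition dual_artin_group :: "nat \<Rightarrow> (nat \<Rightarrow> nat \<Rightarrow> enat) \<Rightarrow> ((nat \<times> bool) list set \<times> bool) list set monoid" where
  "dual_artin_group n M = presented_group (dual_gens n M) (dual_relators n M)"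

definition dual_psi :: "nat \<Rightarrow> (nat \<Rightarrow> nat \<Rightarrow> enat) \<Rightarrow> (nat \<times> bool) list set \<Rightarrow> ((nat \<times> bool) list set \<times> bool) list set" where
  "dual_psi n M \<beta> = pres_class (dual_gens n M) (dual_relators n M)
                      (map (\<lambda>(i, b). (cox_gen n M i, b)) (SOME w. w \<in> \<beta>))"

text \<open>Braid group on n strands with generators \<open>\<sigma>_0, ..., \<sigma>_(n-2)\<close>.\<close>
definition braid_relators :: "nat \<Rightarrow> (nat \<times> bool) list set" where
  "braid_relators n =
     {eq_relator (pos_word [i, j]) (pos_word [j, i]) | i j. j < n - 1 \<and> i + 2 \<le> j}
     \<union> {eq_relator (pos_word [i, i + 1, i]) (pos_word [i + 1, i, i + 1]) | i. i + 1 < n - 1}"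

definition braid_group :: "nat \<Rightarrow> (nat \<times> bool) list set monoid" where
  "braid_group n = presented_group {..<n - 1} (braid_relators n)"

text \<open>Action of \<open>\<sigma>_i\<close> (b = True) and \<open>\<sigma>_i^{-1}\<close> (b = False) on tuples (0-based positions i, i+1).\<close>
definition hurwitz_gen :: "('g, 'b) monoid_scheme \<Rightarrow> nat \<times> bool \<Rightarrow> 'g list \<Rightarrow> 'g list" where
  "hurwitz_gen G ib gs = (case ib of (i, b) \<Rightarrow>
     (if b then gs[i := gs ! i \<otimes>\<^bsub>G\<^esub> gs ! (i + 1) \<otimes>\<^bsub>G\<^esub> inv\<^bsub>G\<^esub> (gs ! i), i + 1 := gs ! i]
      else gs[i := gs ! (i + 1), i + 1 := inv\<^bsub>G\<^esub> (gs ! (i + 1)) \<otimes>\<^bsub>G\<^esub> gs ! i \<otimes>\<^bsub>G\<^esub> gs ! (i + 1)]))"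

definition hurwitz_word :: "('g, 'b) monoid_scheme \<Rightarrow> (nat \<times> bool) list \<Rightarrow> 'g list \<Rightarrow> 'g list" where
  "hurwitz_word G w gs = foldr (hurwitz_gen G) w gs"

definition hurwitz_act :: "('g, 'b) monoid_scheme \<Rightarrow> (nat \<times> bool) list set \<Rightarrow> 'g list \<Rightarrow> 'g list" where
  "hurwitz_act G \<beta> gs = hurwitz_word G (SOME w. w \<in> \<beta>) gs"

definition braid_stabilizer :: "nat \<Rightarrow> ('g, 'b) monoid_scheme \<Rightarrow> 'g list \<Rightarrow> (nat \<times> bool) list set set" where
  "braid_stabilizer n G gs = {\<beta> \<in> carrier (braid_group n). hurwitz_act G \<beta> gs = gs}"

definition well_stabilized :: "nat \<Rightarrow> (nat \<Rightarrow> nat \<Rightarrow> enat) \<Rightarrow> bool" where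
  "well_stabilized n M \<longleftrightarrow>
     braid_stabilizer n (coxeter_group n M) (map (cox_gen n M) [0..<n])
     = braid_stabilizer n (artin_group n M) (map (art_gen n M) [0..<n])"

end

theory Submission
  imports Defs "HOL-Library.Function_Algebras" Complex_Main
begin

lemma pres_rel_cong:
  assumes "pres_rel X R u v"
  shows "pres_rel X R (p @ u @ q) (p @ v @ q)"
  using assms
proof (induction arbitrary: p q)
  case (pr_refl w) then show ?case by (rule pres_rel.pr_refl)
next
  case (pr_sym u v) then show ?case by (blast intro: pres_rel.pr_sym)
next
  case (pr_trans u v w) then show ?case by (blast intro: pres_rel.pr_trans)
next
  case (pr_cancel a u b v)
  have "pres_rel X R ((p @ u) @ [(a, b), (a, \<not> b)] @ (v @ q)) ((p @ u) @ (v @ q))"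
    using pr_cancel by (rule pres_rel.pr_cancel)
  then show ?case by simp
next
  case (pr_relator r u v)
  have "pres_rel X R ((p @ u) @ r @ (v @ q)) ((p @ u) @ (v @ q))"
    using pr_relator by (rule pres_rel.pr_relator)
  then show ?case by simp
qed

lemma pres_rel_append:
  assumes "pres_rel X R u u'" "pres_rel X R v v'"
  shows "pres_rel X R (u @ v) (u' @ v')"
proof -
  have "pres_rel X R ([] @ u @ v) ([] @ u' @ v)" by (rule pres_rel_cong[OF assms(1)])
  moreover have "pres_rel X R (u' @ v @ []) (u' @ v' @ [])" by (rule pres_rel_cong[OF assms(2)])
  ultimately show ?thesis by (auto intro: pres_rel.pr_trans)
qed

lemma pres_class_eq_iff:
  "pres_class X R u = pres_class X R v \<longleftrightarrow> pres_rel X R u v"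
proof
  assume "pres_class X R u = pres_class X R v"
  then have "v \<in> pres_class X R u" by (auto simp: pres_class_def intro: pres_rel.pr_refl)
  then show "pres_rel X R u v" by (simp add: pres_class_def)
next
  assume "pres_rel X R u v"
  then show "pres_class X R u = pres_class X R v"
    unfolding pres_class_def by (auto intro: pres_rel.pr_trans pres_rel.pr_sym)
qed

lemma pres_class_mem: "w \<in> pres_class X R w"
  by (simp add: pres_class_def pres_rel.pr_refl)

lemma pres_mult_class:
  "pres_class X R u \<otimes>\<^bsub>presented_group X R\<^esub> pres_class X R v = pres_class X R (u @ v)"
  unfolding presented_group_def pres_class_def
  by (auto intro: pres_rel.pr_trans pres_rel.pr_sym pres_rel_append pres_rel.pr_refl)

lemma pres_one: "\<one>\<^bsub>presented_group X R\<^esub> = pres_class X R []"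
  by (simp add: presented_group_def)

lemma pres_carrier: "carrier (presented_group X R) = {pres_class X R w | w. set w \<subseteq> X \<times> UNIV}"
  by (simp add: presented_group_def)

lemma pres_class_in_carrier: "set w \<subseteq> X \<times> UNIV \<Longrightarrow> pres_class X R w \<in> carrier (presented_group X R)"
  by (auto simp: pres_carrier)

lemma word_inv_append[simp]: "word_inv (u @ v) = word_inv v @ word_inv u"
  by (simp add: word_inv_def)

lemma word_inv_Cons: "word_inv ((a, b) # w) = word_inv w @ [(a, \<not> b)]"
  by (simp add: word_inv_def)

lemma word_inv_Nil[simp]: "word_inv [] = []"
  by (simp add: word_inv_def)

lemma word_inv_set: "set w \<subseteq> X \<times> UNIV \<Longrightarrow> set (word_inv w) \<subseteq> X \<times> UNIV"
  by (auto simp: word_inv_def)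

lemma word_inv_word_inv[simp]: "word_inv (word_inv w) = w"
  by (simp add: word_inv_def rev_map comp_def case_prod_beta)

lemma pres_inv_cancel:
  assumes "set w \<subseteq> X \<times> UNIV"
  shows "pres_rel X R (word_inv w @ w) []"
  using assms
proof (induction w)
  case Nil then show ?case by (simp add: pres_rel.pr_refl)
next
  case (Cons x w)
  obtain a b where x: "x = (a, b)" by fastforce
  with Cons have a: "a \<in> X" by auto
  have "word_inv (x # w) @ x # w = word_inv w @ [(a, \<not> b), (a, \<not>\<not> b)] @ w"
    by (simp add: x word_inv_Cons)
  moreover have "pres_rel X R (word_inv w @ [(a, \<not> b), (a, \<not>\<not> b)] @ w) (word_inv w @ w)"
    using a by (rule pres_rel.pr_cancel)
  ultimately show ?case using Cons by (auto intro: pres_rel.pr_trans)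
qed

lemma pres_inv_cancel':
  assumes "set w \<subseteq> X \<times> UNIV"
  shows "pres_rel X R (w @ word_inv w) []"
  using pres_inv_cancel[OF word_inv_set[OF assms], of R] by simp

lemma pres_group: "group (presented_group X R)"
proof (rule groupI)
  fix x y assume "x \<in> carrier (presented_group X R)" "y \<in> carrier (presented_group X R)"
  then obtain u v where "x = pres_class X R u" "set u \<subseteq> X \<times> UNIV" "y = pres_class X R v" "set v \<subseteq> X \<times> UNIV"
    by (auto simp: pres_carrier)
  then show "x \<otimes>\<^bsub>presented_group X R\<^esub> y \<in> carrier (presented_group X R)"
    by (auto simp: pres_mult_class intro!: pres_class_in_carrier)
next
  show "\<one>\<^bsub>presented_group X R\<^esub> \<in> carrier (presented_group X R)"
    by (auto simp: pres_one intro!: pres_class_in_carrier)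
next
  fix x y z assume "x \<in> carrier (presented_group X R)" "y \<in> carrier (presented_group X R)"
    "z \<in> carrier (presented_group X R)"
  then obtain u v w where "x = pres_class X R u" "y = pres_class X R v" "z = pres_class X R w"
    by (auto simp: pres_carrier)
  then show "x \<otimes>\<^bsub>presented_group X R\<^esub> y \<otimes>\<^bsub>presented_group X R\<^esub> z =
      x \<otimes>\<^bsub>presented_group X R\<^esub> (y \<otimes>\<^bsub>presented_group X R\<^esub> z)"
    by (simp add: pres_mult_class)
next
  fix x assume "x \<in> carrier (presented_group X R)"
  then obtain u where "x = pres_class X R u" by (auto simp: pres_carrier)
  then show "\<one>\<^bsub>presented_group X R\<^esub> \<otimes>\<^bsub>presented_group X R\<^esub> x = x"
    by (simp add: pres_one pres_mult_class)
next
  fix x assume "x \<in> carrier (presented_group X R)"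
  then obtain u where u: "x = pres_class X R u" "set u \<subseteq> X \<times> UNIV" by (auto simp: pres_carrier)
  show "\<exists>y\<in>carrier (presented_group X R). y \<otimes>\<^bsub>presented_group X R\<^esub> x = \<one>\<^bsub>presented_group X R\<^esub>"
    using u pres_inv_cancel[OF u(2), of R]
    by (intro bexI[of _ "pres_class X R (word_inv u)"])
       (auto simp: pres_mult_class pres_one pres_class_eq_iff intro!: pres_class_in_carrier word_inv_set)
qed

lemma pres_inv_class:
  assumes "set w \<subseteq> X \<times> UNIV"
  shows "inv\<^bsub>presented_group X R\<^esub> (pres_class X R w) = pres_class X R (word_inv w)"
proof -
  interpret group "presented_group X R" by (rule pres_group)
  show ?thesis
    using assms
    by (intro inv_equality)
       (auto simp: pres_mult_class pres_one pres_class_eq_iff pres_inv_cancel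
             intro!: pres_class_in_carrier word_inv_set)
qed

definition lmap :: "('a \<Rightarrow> 'b) \<Rightarrow> ('a \<times> bool) list \<Rightarrow> ('b \<times> bool) list" where
  "lmap f w = map (\<lambda>(i, b). (f i, b)) w"

lemma lmap_append[simp]: "lmap f (u @ v) = lmap f u @ lmap f v"
  by (simp add: lmap_def)

lemma lmap_word_inv: "lmap f (word_inv w) = word_inv (lmap f w)"
  by (simp add: lmap_def word_inv_def rev_map case_prod_beta)

lemma induced_hom:
  assumes rel: "\<And>u v. pres_rel X R u v \<Longrightarrow> pres_rel Y R' (lmap f u) (lmap f v)"
    and fX: "f ` X \<subseteq> Y"
  defines "F \<equiv> (\<lambda>C. pres_class Y R' (lmap f (SOME w. w \<in> C)))"
  shows "\<And>u. F (pres_class X R u) = pres_class Y R' (lmap f u)"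
    and "F \<in> hom (presented_group X R) (presented_group Y R')"
proof -
  show val: "F (pres_class X R u) = pres_class Y R' (lmap f u)" for u
  proof -
    have "(SOME w. w \<in> pres_class X R u) \<in> pres_class X R u"
      by (rule someI[of _ u]) (rule pres_class_mem)
    then have "pres_rel X R u (SOME w. w \<in> pres_class X R u)" by (simp add: pres_class_def)
    then have "pres_rel Y R' (lmap f u) (lmap f (SOME w. w \<in> pres_class X R u))" by (rule rel)
    then show ?thesis unfolding F_def by (simp add: pres_class_eq_iff pres_rel.pr_sym)
  qed
  show "F \<in> hom (presented_group X R) (presented_group Y R')"
  proof (rule homI)
    fix x assume "x \<in> carrier (presented_group X R)"
    then obtain u where "x = pres_class X R u" "set u \<subseteq> X \<times> UNIV" by (auto simp: pres_carrier)
    then show "F x \<in> carrier (presented_group Y R')"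
    proof -
      assume a: "x = pres_class X R u" "set u \<subseteq> X \<times> UNIV"
      have "set (lmap f u) \<subseteq> Y \<times> UNIV" using a(2) fX unfolding lmap_def by fastforce
      then show ?thesis using a(1) by (simp add: val pres_class_in_carrier)
    qed
  next
    fix x y assume "x \<in> carrier (presented_group X R)" "y \<in> carrier (presented_group X R)"
    then obtain u v where "x = pres_class X R u" "y = pres_class X R v" by (auto simp: pres_carrier)
    then show "F (x \<otimes>\<^bsub>presented_group X R\<^esub> y) = F x \<otimes>\<^bsub>presented_group Y R'\<^esub> F y"
      by (simp add: val pres_mult_class)
  qed
qed

lemma pres_rel_wf:
  assumes "pres_rel X R u v" "\<And>r. r \<in> R \<Longrightarrow> set r \<subseteq> X \<times> UNIV"
  shows "set u \<subseteq> X \<times> UNIV \<longleftrightarrow> set v \<subseteq> X \<times> UNIV"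
  using assms by induction auto

lemma eq_relator_rel:
  assumes "eq_relator p q \<in> R" "set q \<subseteq> X \<times> UNIV"
  shows "pres_rel X R p q"
proof -
  have "pres_rel X R (p @ []) (p @ word_inv q @ q)"
    using pres_rel_cong[OF pres_inv_cancel[OF assms(2), of R], where p=p and q="[]"] by (simp add: pres_rel.pr_sym)
  moreover have "pres_rel X R ([] @ (p @ word_inv q) @ q) ([] @ q)"
    using assms(1) unfolding eq_relator_def by (rule pres_rel.pr_relator)
  ultimately show ?thesis by (auto intro: pres_rel.pr_trans)
qed


locale cox =
  fixes n :: nat and M :: "nat \<Rightarrow> nat \<Rightarrow> enat"
  assumes cm: "coxeter_matrix n M"
begin

abbreviation "W \<equiv> coxeter_group n M"
abbreviation "XC \<equiv> {..<n}"
abbreviation "RC \<equiv> coxeter_relators n M"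
abbreviation "T \<equiv> cox_T n M"
abbreviation "RL \<equiv> refl_length n M"
abbreviation "cprod \<equiv> cox_prod n M"
abbreviation "sg \<equiv> cox_gen n M"

lemma W_def': "W = presented_group XC RC" by (simp add: coxeter_group_def)

sublocale W: group W by (simp add: coxeter_group_def pres_group)

lemma Wc1[simp]: "x \<in> carrier W \<Longrightarrow> y \<in> carrier W \<Longrightarrow> inv\<^bsub>W\<^esub> x \<otimes>\<^bsub>W\<^esub> (x \<otimes>\<^bsub>W\<^esub> y) = y"
  by (simp flip: W.m_assoc)
lemma Wc2[simp]: "x \<in> carrier W \<Longrightarrow> y \<in> carrier W \<Longrightarrow> x \<otimes>\<^bsub>W\<^esub> (inv\<^bsub>W\<^esub> x \<otimes>\<^bsub>W\<^esub> y) = y"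
  by (simp flip: W.m_assoc)

lemma sg_def': "sg i = pres_class XC RC [(i, True)]"
  by (simp add: cox_gen_def pres_gen_def)

lemma sg_carrier[simp]: "i < n \<Longrightarrow> sg i \<in> carrier W"
  by (simp add: sg_def' W_def' pres_class_in_carrier)

lemma W_mult: "pres_class XC RC u \<otimes>\<^bsub>W\<^esub> pres_class XC RC v = pres_class XC RC (u @ v)"
  by (simp add: W_def' pres_mult_class)

lemma W_one: "\<one>\<^bsub>W\<^esub> = pres_class XC RC []"
  by (simp add: W_def' pres_one)

lemma relator_triv: "r \<in> RC \<Longrightarrow> pres_rel XC RC r []"
  using pres_rel.pr_relator[of r RC XC "[]" "[]"] by simp

lemma sg_sq_rel: "i < n \<Longrightarrow> pres_rel XC RC [(i, True), (i, True)] []"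
proof -
  assume i: "i < n"
  have "M i i = enat 1" using cm i by (simp add: coxeter_matrix_def one_enat_def)
  then have "concat (replicate 1 [(i, True), (i, True)]) \<in> RC"
    unfolding coxeter_relators_def using i by blast
  then show ?thesis using relator_triv by simp
qed

lemma sg_sq: "i < n \<Longrightarrow> sg i \<otimes>\<^bsub>W\<^esub> sg i = \<one>\<^bsub>W\<^esub>"
  by (simp add: sg_def' W_mult W_one pres_class_eq_iff sg_sq_rel)

lemma sg_inv: "i < n \<Longrightarrow> inv\<^bsub>W\<^esub> sg i = sg i"
  by (rule W.inv_equality) (auto simp: sg_sq)

lemma letter_class: "i < n \<Longrightarrow> pres_class XC RC [(i, b)] = sg i"
proof (cases b)
  case True then show ?thesis by (simp add: sg_def')
next
  case False
  assume i: "i < n"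
  have "pres_class XC RC [(i, False)] = inv\<^bsub>W\<^esub> sg i"
    using i by (simp add: sg_def' W_def' pres_inv_class word_inv_def)
  then show ?thesis using False i sg_inv by simp
qed

lemma T_carrier: "t \<in> T \<Longrightarrow> t \<in> carrier W"
  unfolding cox_T_def cox_S_def by auto

lemma T_sq: "t \<in> T \<Longrightarrow> t \<otimes>\<^bsub>W\<^esub> t = \<one>\<^bsub>W\<^esub>"
proof -
  assume "t \<in> T"
  then obtain g i where g: "g \<in> carrier W" "i < n" "t = g \<otimes>\<^bsub>W\<^esub> sg i \<otimes>\<^bsub>W\<^esub> inv\<^bsub>W\<^esub> g"
    unfolding cox_T_def cox_S_def by auto
  have "t \<otimes>\<^bsub>W\<^esub> t = g \<otimes>\<^bsub>W\<^esub> (sg i \<otimes>\<^bsub>W\<^esub> sg i) \<otimes>\<^bsub>W\<^esub> inv\<^bsub>W\<^esub> g"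
    using g by (simp add: W.m_assoc)
  also have "\<dots> = \<one>\<^bsub>W\<^esub>" using g by (simp add: sg_sq)
  finally show ?thesis .
qed

lemma Tc1[simp]: "t \<in> T \<Longrightarrow> y \<in> carrier W \<Longrightarrow> t \<otimes>\<^bsub>W\<^esub> (t \<otimes>\<^bsub>W\<^esub> y) = y"
  using T_carrier T_sq by (simp flip: W.m_assoc)

lemma T_inv: "t \<in> T \<Longrightarrow> inv\<^bsub>W\<^esub> t = t"
  by (rule W.inv_equality) (auto simp: T_sq T_carrier)

lemma T_conj: "t \<in> T \<Longrightarrow> g \<in> carrier W \<Longrightarrow> g \<otimes>\<^bsub>W\<^esub> t \<otimes>\<^bsub>W\<^esub> inv\<^bsub>W\<^esub> g \<in> T"
proof -
  assume "t \<in> T" and g: "g \<in> carrier W"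
  then obtain g' s where g': "g' \<in> carrier W" "s \<in> cox_S n M" "t = g' \<otimes>\<^bsub>W\<^esub> s \<otimes>\<^bsub>W\<^esub> inv\<^bsub>W\<^esub> g'"
    unfolding cox_T_def by auto
  have s: "s \<in> carrier W" using g'(2) unfolding cox_S_def by auto
  have "g \<otimes>\<^bsub>W\<^esub> t \<otimes>\<^bsub>W\<^esub> inv\<^bsub>W\<^esub> g = (g \<otimes>\<^bsub>W\<^esub> g') \<otimes>\<^bsub>W\<^esub> s \<otimes>\<^bsub>W\<^esub> inv\<^bsub>W\<^esub> (g \<otimes>\<^bsub>W\<^esub> g')"
    using g g' s by (simp add: W.m_assoc W.inv_mult_group)
  then show ?thesis using g g' unfolding cox_T_def by blast
qed

lemma T_conj': "t \<in> T \<Longrightarrow> a \<in> T \<Longrightarrow> a \<otimes>\<^bsub>W\<^esub> t \<otimes>\<^bsub>W\<^esub> a \<in> T"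
  using T_conj[of t a] by (simp add: T_inv T_carrier)

lemma sg_T: "i < n \<Longrightarrow> sg i \<in> T"
proof -
  assume i: "i < n"
  have "sg i = \<one>\<^bsub>W\<^esub> \<otimes>\<^bsub>W\<^esub> sg i \<otimes>\<^bsub>W\<^esub> inv\<^bsub>W\<^esub> \<one>\<^bsub>W\<^esub>" using i by simp
  then show ?thesis unfolding cox_T_def cox_S_def using i by blast
qed

lemma cprod_Nil[simp]: "cprod [] = \<one>\<^bsub>W\<^esub>" by (simp add: cox_prod_def)
lemma cprod_Cons[simp]: "cprod (a # ts) = a \<otimes>\<^bsub>W\<^esub> cprod ts" by (simp add: cox_prod_def)

lemma cprod_carrier: "set ts \<subseteq> carrier W \<Longrightarrow> cprod ts \<in> carrier W"
  by (induction ts) auto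

lemma cprod_append: "set xs \<subseteq> carrier W \<Longrightarrow> set ys \<subseteq> carrier W \<Longrightarrow>
    cprod (xs @ ys) = cprod xs \<otimes>\<^bsub>W\<^esub> cprod ys"
  by (induction xs) (auto simp: W.m_assoc cprod_carrier)

lemma T_subset_carrier: "set ts \<subseteq> T \<Longrightarrow> set ts \<subseteq> carrier W"
  using T_carrier by blast

lemma word_class_prod: "set w \<subseteq> XC \<times> UNIV \<Longrightarrow> pres_class XC RC w = cprod (map (\<lambda>(i, b). sg i) w)"
proof (induction w)
  case Nil then show ?case by (simp add: W_one)
next
  case (Cons x w)
  obtain i b where x: "x = (i, b)" by fastforce
  with Cons have i: "i < n" by auto
  have "pres_class XC RC (x # w) = pres_class XC RC [(i, b)] \<otimes>\<^bsub>W\<^esub> pres_class XC RC w"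
    by (simp add: W_mult x)
  then show ?case using Cons i x by (simp add: letter_class)
qed

lemma carrier_T_prod: "x \<in> carrier W \<Longrightarrow> \<exists>ts. set ts \<subseteq> T \<and> cprod ts = x"
proof -
  assume "x \<in> carrier W"
  then obtain w where w: "x = pres_class XC RC w" "set w \<subseteq> XC \<times> UNIV"
    by (auto simp: W_def' pres_carrier)
  then have "set (map (\<lambda>(i, b). sg i) w) \<subseteq> T" using sg_T by auto
  then show ?thesis using w word_class_prod by blast
qed

lemma RL_le: "set ts \<subseteq> T \<Longrightarrow> cprod ts = a \<Longrightarrow> RL a \<le> length ts"
  unfolding refl_length_def by (rule Least_le) blast

lemma RL_ex: "a \<in> carrier W \<Longrightarrow> \<exists>ts. set ts \<subseteq> T \<and> length ts = RL a \<and> cprod ts = a"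
proof -
  assume "a \<in> carrier W"
  then obtain ts where "set ts \<subseteq> T" "cprod ts = a" using carrier_T_prod by blast
  then have "\<exists>k ts. set ts \<subseteq> T \<and> length ts = k \<and> cprod ts = a" by blast
  then show ?thesis unfolding refl_length_def by (rule LeastI_ex)
qed

lemma RL_mult: "a \<in> carrier W \<Longrightarrow> b \<in> carrier W \<Longrightarrow> RL (a \<otimes>\<^bsub>W\<^esub> b) \<le> RL a + RL b"
proof -
  assume a: "a \<in> carrier W" and b: "b \<in> carrier W"
  obtain xs where xs: "set xs \<subseteq> T" "length xs = RL a" "cprod xs = a" using RL_ex[OF a] by blast
  obtain ys where ys: "set ys \<subseteq> T" "length ys = RL b" "cprod ys = b" using RL_ex[OF b] by blast
  have "cprod (xs @ ys) = a \<otimes>\<^bsub>W\<^esub> b" using xs ys by (simp add: cprod_append T_subset_carrier)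
  then have "RL (a \<otimes>\<^bsub>W\<^esub> b) \<le> length (xs @ ys)" using xs ys by (intro RL_le) auto
  then show ?thesis using xs ys by simp
qed

definition conjT :: "(nat \<times> bool) list set \<Rightarrow> (nat \<times> bool) list set \<Rightarrow> (nat \<times> bool) list set" where
  "conjT a x = a \<otimes>\<^bsub>W\<^esub> x \<otimes>\<^bsub>W\<^esub> a"

lemma cprod_conj:
  assumes "a \<in> T" "set ts \<subseteq> T"
  shows "cprod (map (conjT a) ts) = a \<otimes>\<^bsub>W\<^esub> cprod ts \<otimes>\<^bsub>W\<^esub> a"
  using assms(2)
proof (induction ts)
  case Nil then show ?case using assms(1) by (simp add: T_sq T_carrier)
next
  case (Cons x ts)
  have a: "a \<in> carrier W" using assms(1) T_carrier by blast
  have x: "x \<in> carrier W" using Cons T_carrier by auto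
  have p: "cprod ts \<in> carrier W" using Cons by (intro cprod_carrier T_subset_carrier) auto
  have IH: "cprod (map (conjT a) ts) = a \<otimes>\<^bsub>W\<^esub> cprod ts \<otimes>\<^bsub>W\<^esub> a" using Cons by simp
  have "cprod (map (conjT a) (x # ts)) = (a \<otimes>\<^bsub>W\<^esub> x \<otimes>\<^bsub>W\<^esub> a) \<otimes>\<^bsub>W\<^esub> (a \<otimes>\<^bsub>W\<^esub> cprod ts \<otimes>\<^bsub>W\<^esub> a)"
    by (simp only: list.map cprod_Cons IH) (simp add: conjT_def)
  also have "\<dots> = a \<otimes>\<^bsub>W\<^esub> x \<otimes>\<^bsub>W\<^esub> (a \<otimes>\<^bsub>W\<^esub> a) \<otimes>\<^bsub>W\<^esub> cprod ts \<otimes>\<^bsub>W\<^esub> a"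
    using a x p by (simp add: W.m_assoc)
  also have "\<dots> = a \<otimes>\<^bsub>W\<^esub> cprod (x # ts) \<otimes>\<^bsub>W\<^esub> a"
    using a x p assms(1) by (simp add: T_sq W.m_assoc)
  finally show ?case .
qed

lemma conjT_T: "a \<in> T \<Longrightarrow> set ts \<subseteq> T \<Longrightarrow> set (map (conjT a) ts) \<subseteq> T"
  using T_conj' by (auto simp: conjT_def)

definition extr :: "(nat \<times> bool) list set list \<Rightarrow> nat \<Rightarrow> (nat \<times> bool) list set list" where
  "extr ts i = map (conjT (ts ! i)) (take i ts) @ drop (Suc i) ts"

lemma extr_T: "set ts \<subseteq> T \<Longrightarrow> i < length ts \<Longrightarrow> set (extr ts i) \<subseteq> T"
proof -
  assume a: "set ts \<subseteq> T" "i < length ts"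
  then have "ts ! i \<in> T" "set (take i ts) \<subseteq> T" "set (drop (Suc i) ts) \<subseteq> T"
    by (auto dest: in_set_takeD in_set_dropD)
  then show ?thesis unfolding extr_def using conjT_T by auto
qed

lemma extr_length: "i < length ts \<Longrightarrow> length (extr ts i) = length ts - 1"
  by (simp add: extr_def)

lemma extr_nth: "i < j \<Longrightarrow> j < length ts \<Longrightarrow> extr ts i ! (j - 1) = ts ! j"
  by (auto simp: extr_def nth_append)

lemma extr_prod:
  assumes ts: "set ts \<subseteq> T" and i: "i < length ts"
  shows "cprod ts = ts ! i \<otimes>\<^bsub>W\<^esub> cprod (extr ts i)"
proof -
  let ?a = "ts ! i" let ?P = "take i ts" let ?Q = "drop (Suc i) ts"
  have a: "?a \<in> T" using ts i by auto
  have aC: "?a \<in> carrier W" using a T_carrier by blast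
  have PT: "set ?P \<subseteq> T" using ts by (auto dest: in_set_takeD)
  have QT: "set ?Q \<subseteq> T" using ts by (auto dest: in_set_dropD)
  have P: "cprod ?P \<in> carrier W" using PT by (intro cprod_carrier T_subset_carrier)
  have Q: "cprod ?Q \<in> carrier W" using QT by (intro cprod_carrier T_subset_carrier)
  have "ts = ?P @ ?a # ?Q" using i by (simp add: id_take_nth_drop)
  then have "cprod ts = cprod ?P \<otimes>\<^bsub>W\<^esub> (?a \<otimes>\<^bsub>W\<^esub> cprod ?Q)"
    by (metis PT QT a cprod_append cprod_Cons T_subset_carrier insert_subset list.set(2))
  also have "\<dots> = ?a \<otimes>\<^bsub>W\<^esub> (?a \<otimes>\<^bsub>W\<^esub> cprod ?P \<otimes>\<^bsub>W\<^esub> ?a) \<otimes>\<^bsub>W\<^esub> cprod ?Q"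
    using aC P Q a by (simp add: W.m_assoc T_sq flip: W.m_assoc[of ?a ?a])
  also have "?a \<otimes>\<^bsub>W\<^esub> cprod ?P \<otimes>\<^bsub>W\<^esub> ?a = cprod (map (conjT ?a) ?P)"
    using cprod_conj[OF a PT] by simp
  finally have e: "cprod ts = ts ! i \<otimes>\<^bsub>W\<^esub> cprod (map (conjT ?a) ?P) \<otimes>\<^bsub>W\<^esub> cprod ?Q" .
  have MT: "set (map (conjT ?a) ?P) \<subseteq> T" using conjT_T[OF a PT] .
  have "cprod (extr ts i) = cprod (map (conjT ?a) ?P) \<otimes>\<^bsub>W\<^esub> cprod ?Q"
    unfolding extr_def using MT QT by (intro cprod_append T_subset_carrier)
  moreover have "cprod (map (conjT ?a) ?P) \<in> carrier W" using MT by (intro cprod_carrier T_subset_carrier)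
  ultimately show ?thesis using e aC Q by (simp add: W.m_assoc)
qed

end


lemma sin_sum_zero:
  fixes k :: nat and th phi :: real
  assumes k: "real k * th = 2 * pi" and s: "sin (th / 2) \<noteq> 0"
  shows "(\<Sum>l<k. sin (real l * th + phi)) = 0"
proof -
  define g where "g l = cos (real l * th + phi - th / 2)" for l :: nat
  have cc: "cos (x - t) - cos (x + t) = 2 * sin t * sin x" for x t :: real
    by (simp add: cos_diff cos_add)
  have e: "2 * sin (th / 2) * sin (real l * th + phi) = g l - g (Suc l)" for l
  proof -
    have "real (Suc l) * th + phi - th / 2 = (real l * th + phi) + th / 2" by (simp add: algebra_simps)
    then have "g (Suc l) = cos ((real l * th + phi) + th / 2)" unfolding g_def by (rule arg_cong[where f=cos])
    moreover have "g l = cos ((real l * th + phi) - th / 2)" unfolding g_def by simp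
    ultimately show ?thesis using cc[of "real l * th + phi" "th / 2"] by simp
  qed
  have "2 * sin (th / 2) * (\<Sum>l<k. sin (real l * th + phi)) = (\<Sum>l<k. g l - g (Suc l))"
    by (simp add: sum_distrib_left e)
  also have "\<dots> = g 0 - g k" by (rule sum_lessThan_telescope')
  also have "g k = g 0" unfolding g_def using k
    by (simp add: add.commute[of "2 * pi"] add.assoc[symmetric]) (metis add.commute cos_periodic diff_add_eq)
  finally show ?thesis using s by simp
qed

lemma aux_lin:
  fixes B A z1 z0 P Q R U c :: real
  shows "2 * c * (z1 * P - z0 * Q) - (z1 * R - z0 * U) = z1 * (2 * c * P - R) - z0 * (2 * c * Q - U)"
  by (simp add: algebra_simps)

lemma cheb_closed:
  fixes z :: "nat \<Rightarrow> real"
  assumes rec: "\<And>l. z (l + 2) = 2 * cos th * z (l + 1) - z l"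
  shows "z l * sin th = z 1 * sin (real l * th) - z 0 * sin ((real l - 1) * th)"
proof -
  have "(z l * sin th = z 1 * sin (real l * th) - z 0 * sin ((real l - 1) * th)) \<and>
        (z (l + 1) * sin th = z 1 * sin (real (l + 1) * th) - z 0 * sin ((real (l + 1) - 1) * th))"
  proof (induction l)
    case 0 then show ?case by simp
  next
    case (Suc l)
    have s1: "sin (real (l + 2) * th) = 2 * cos th * sin (real (l + 1) * th) - sin (real l * th)"
    proof -
      have "sin (real (l+1) * th + th) + sin (real (l+1) * th - th) = 2 * cos th * sin (real (l + 1) * th)"
        by (simp add: sin_add sin_diff)
      moreover have "real (l+1) * th + th = real (l + 2) * th" "real (l+1) * th - th = real l * th"
        by (simp_all add: algebra_simps)
      ultimately show ?thesis by simp
    qed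
    have s2: "sin ((real (l + 2) - 1) * th) = 2 * cos th * sin ((real (l + 1) - 1) * th) - sin ((real l - 1) * th)"
    proof -
      have "sin (real l * th + th) + sin (real l * th - th) = 2 * cos th * sin (real l * th)"
        by (simp add: sin_add sin_diff)
      moreover have "real l * th + th = (real (l + 2) - 1) * th" "real l * th - th = (real l - 1) * th"
        "(real (l + 1) - 1) * th = real l * th"
        by (simp_all add: algebra_simps)
      ultimately show ?thesis by simp
    qed
    have e1: "z l * sin th = z 1 * sin (real l * th) - z 0 * sin ((real l - 1) * th)" using Suc by blast
    have e2: "z (l + 1) * sin th = z 1 * sin (real (l + 1) * th) - z 0 * sin ((real (l + 1) - 1) * th)" using Suc by blast
    have "z (l + 2) * sin th = (2 * cos th * z (l + 1) - z l) * sin th"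
      using rec[of l] by simp
    also have "\<dots> = 2 * cos th * (z (l + 1) * sin th) - z l * sin th"
      by (simp add: algebra_simps)
    finally have "z (l + 2) * sin th = 2 * cos th * (z (l + 1) * sin th) - z l * sin th" .
    also have "\<dots> = z 1 * (2 * cos th * sin (real (l + 1) * th) - sin (real l * th))
       - z 0 * (2 * cos th * sin ((real (l + 1) - 1) * th) - sin ((real l - 1) * th))"
      unfolding e1 e2 by (rule aux_lin)
    also have "\<dots> = z 1 * sin (real (l + 2) * th) - z 0 * sin ((real (l + 2) - 1) * th)"
      by (simp only: s1 s2)
    finally show ?case using Suc by (simp add: add.commute)
  qed
  then show ?thesis by blast
qed

lemma cheb_sum_zero:
  fixes z :: "nat \<Rightarrow> real" and k :: nat
  assumes k: "k \<ge> 3"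
    and rec: "\<And>l. z (l + 2) = 2 * cos (2 * pi / real k) * z (l + 1) - z l"
  shows "(\<Sum>l<k. z l) = 0"
proof -
  define th where "th = 2 * pi / real k"
  have kth: "real k * th = 2 * pi" using k by (simp add: th_def)
  have th0: "0 < th" using k by (simp add: th_def)
  have thpi: "th < pi" using k pi_gt_zero by (simp add: th_def field_simps)
  have sth: "sin th \<noteq> 0" using sin_gt_zero[OF th0 thpi] by simp
  have sth2: "sin (th / 2) \<noteq> 0" using sin_gt_zero[of "th / 2"] th0 thpi by simp
  have c: "z l * sin th = z 1 * sin (real l * th) - z 0 * sin ((real l - 1) * th)" for l
    by (rule cheb_closed) (use rec in \<open>simp add: th_def\<close>)
  have "(\<Sum>l<k. z l) * sin th = (\<Sum>l<k. z l * sin th)" by (simp add: sum_distrib_right)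
  also have "\<dots> = (\<Sum>l<k. z 1 * sin (real l * th + 0) - z 0 * sin (real l * th + (- th)))"
    by (intro sum.cong refl) (subst c, simp add: algebra_simps)
  also have "\<dots> = z 1 * (\<Sum>l<k. sin (real l * th + 0)) - z 0 * (\<Sum>l<k. sin (real l * th + (- th)))"
    by (simp add: sum_subtractf sum_distrib_left)
  also have "\<dots> = 0" using sin_sum_zero[OF kth sth2, of 0] sin_sum_zero[OF kth sth2, of "-th"] by simp
  finally show ?thesis using sth by simp
qed


definition sc :: "real \<Rightarrow> (nat \<Rightarrow> real) \<Rightarrow> (nat \<Rightarrow> real)" where
  "sc r v = (\<lambda>m. r * v m)"

interpretation FV: vector_space sc
  by unfold_locales (auto simp: sc_def fun_eq_iff algebra_simps)

definition ee :: "nat \<Rightarrow> nat \<Rightarrow> real" where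
  "ee i = (\<lambda>m. if m = i then 1 else 0)"

context cox
begin

definition Acoef :: "nat \<Rightarrow> nat \<Rightarrow> real" where
  "Acoef i j = (if i = j then 2 else (case M i j of enat k \<Rightarrow> - 2 * cos (pi / real k) | \<infinity> \<Rightarrow> 0))"

definition fl :: "nat \<Rightarrow> (nat \<Rightarrow> real) \<Rightarrow> real" where
  "fl i v = (\<Sum>j<n. Acoef i j * v j) + v (n + i)"

definition sig :: "nat \<Rightarrow> (nat \<Rightarrow> real) \<Rightarrow> (nat \<Rightarrow> real)" where
  "sig i v = (\<lambda>m. v m - fl i v * ee i m)"

definition evw :: "(nat \<times> bool) list \<Rightarrow> (nat \<Rightarrow> real) \<Rightarrow> (nat \<Rightarrow> real)" where
  "evw w = foldr (\<lambda>x f. sig (fst x) \<circ> f) w id"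

lemma evw_Nil[simp]: "evw [] = id" by (simp add: evw_def)
lemma evw_Cons[simp]: "evw (x # w) = sig (fst x) \<circ> evw w" by (simp add: evw_def)
lemma evw_append: "evw (u @ v) = evw u \<circ> evw v"
  by (induction u) auto

lemma fl_lin: "fl i (\<lambda>m. a * v m + b * u m) = a * fl i v + b * fl i u"
  by (simp add: fl_def sum.distrib sum_distrib_left algebra_simps)

lemma fl_sub[simp]: "fl i (\<lambda>m. v m - c * u m) = fl i v - c * fl i u"
  by (simp add: fl_def sum_subtractf sum_distrib_left algebra_simps)

lemma sig_lin: "sig i (\<lambda>m. a * v m + b * u m) = (\<lambda>m. a * sig i v m + b * sig i u m)"
  by (simp add: sig_def fl_lin fun_eq_iff algebra_simps)

lemma sig_sub[simp]: "sig i (\<lambda>m. v m - c * u m) = (\<lambda>m. sig i v m - c * sig i u m)"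
  by (simp add: sig_def fun_eq_iff algebra_simps)

lemma evw_sub: "evw w (\<lambda>m. v m - c * u m) = (\<lambda>m. evw w v m - c * evw w u m)"
  by (induction w) auto

lemma evw_lin: "evw w (\<lambda>m. a * v m + b * u m) = (\<lambda>m. a * evw w v m + b * evw w u m)"
  by (induction w) (auto simp: sig_lin)

lemma fl_ee: "i < n \<Longrightarrow> j < n \<Longrightarrow> fl i (ee j) = Acoef i j"
proof -
  assume i: "i < n" and j: "j < n"
  have "(\<Sum>q<n. Acoef i q * ee j q) = (\<Sum>q\<in>{j}. Acoef i q * ee j q)"
    by (rule sum.mono_neutral_right) (auto simp: ee_def j)
  then show ?thesis using j by (simp add: fl_def ee_def)
qed

lemma fl_ee_n: "i < n \<Longrightarrow> fl i (ee (n + l)) = (if i = l then 1 else 0)"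
  by (simp add: fl_def ee_def)

lemma Acoef_diag: "Acoef i i = 2" by (simp add: Acoef_def)

lemma sig_sig: "i < n \<Longrightarrow> sig i (sig i v) = v"
proof -
  assume i: "i < n"
  have "fl i (sig i v) = fl i v - fl i v * 2"
    using fl_ee[OF i i] by (simp add: sig_def Acoef_diag)
  then show ?thesis by (simp add: sig_def fun_eq_iff algebra_simps)
qed

lemma sig_only: "m \<noteq> i \<Longrightarrow> sig i v m = v m"
  by (simp add: sig_def ee_def)

lemma dih_step:
  assumes i: "i < n" and j: "j < n" and ij: "i \<noteq> j" and a: "Acoef i j = a" "Acoef j i = a"
  defines "Y \<equiv> sig i \<circ> sig j"
  shows "Y v = (\<lambda>m. v m - fl j v * ee j m - (fl i v - a * fl j v) * ee i m)"
    and "fl i (Y v) = - fl i v + a * fl j v"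
    and "fl j (Y v) = - a * fl i v + (a * a - 1) * fl j v"
proof -
  have sj: "sig j v = (\<lambda>m. 1 * v m + (- fl j v) * ee j m)" by (simp add: sig_def)
  have fisj: "fl i (sig j v) = fl i v - a * fl j v"
    using fl_ee[OF i j] a by (simp add: sig_def)
  have fjsj: "fl j (sig j v) = - fl j v"
    using fl_ee[OF j j] by (simp add: sig_def Acoef_diag)
  show Yv: "Y v = (\<lambda>m. v m - fl j v * ee j m - (fl i v - a * fl j v) * ee i m)"
  proof (rule ext)
    fix m
    have "Y v m = sig j v m - fl i (sig j v) * ee i m" by (simp add: Y_def sig_def[of i])
    also have "\<dots> = v m - fl j v * ee j m - (fl i v - a * fl j v) * ee i m" using fl_ee[OF i j] a by (simp add: sig_def)
    finally show "Y v m = v m - fl j v * ee j m - (fl i v - a * fl j v) * ee i m" .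
  qed
  show "fl i (Y v) = - fl i v + a * fl j v"
    unfolding Yv fl_sub using fl_ee[OF i i] fl_ee[OF i j] a by (simp add: Acoef_diag algebra_simps)
  show "fl j (Y v) = - a * fl i v + (a * a - 1) * fl j v"
    unfolding Yv fl_sub using fl_ee[OF j j] fl_ee[OF j i] a by (simp add: Acoef_diag algebra_simps)
qed

definition dihF :: "real \<Rightarrow> real \<times> real \<Rightarrow> real \<times> real" where
  "dihF a p = (- fst p + a * snd p, - a * fst p + (a * a - 1) * snd p)"

lemma dih_iter:
  assumes i: "i < n" and j: "j < n" and ij: "i \<noteq> j" and a: "Acoef i j = a" "Acoef j i = a"
  shows "((sig i \<circ> sig j) ^^ l) v = (\<lambda>m. v m - (\<Sum>q<l. snd ((dihF a ^^ q) (fl i v, fl j v))) * ee j m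
            - (\<Sum>q<l. fst ((dihF a ^^ q) (fl i v, fl j v)) - a * snd ((dihF a ^^ q) (fl i v, fl j v))) * ee i m)
        \<and> fl i (((sig i \<circ> sig j) ^^ l) v) = fst ((dihF a ^^ l) (fl i v, fl j v))
        \<and> fl j (((sig i \<circ> sig j) ^^ l) v) = snd ((dihF a ^^ l) (fl i v, fl j v))"
proof (induction l)
  case 0 then show ?case by simp
next
  case (Suc l)
  define u where "u = ((sig i \<circ> sig j) ^^ l) v"
  define P where "P q = (dihF a ^^ q) (fl i v, fl j v)" for q
  have IH: "u = (\<lambda>m. v m - (\<Sum>q<l. snd (P q)) * ee j m - (\<Sum>q<l. fst (P q) - a * snd (P q)) * ee i m)"
    "fl i u = fst (P l)" "fl j u = snd (P l)"
    using Suc.IH unfolding u_def P_def by blast+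
  have IH1: "u m = v m - (\<Sum>q<l. snd (P q)) * ee j m - (\<Sum>q<l. fst (P q) - a * snd (P q)) * ee i m" for m
    using fun_cong[OF IH(1), of m] by simp
  have PS: "P (Suc l) = dihF a (P l)" unfolding P_def by simp
  have e: "((sig i \<circ> sig j) ^^ Suc l) v = (sig i \<circ> sig j) u" by (simp add: u_def)
  note st = dih_step[OF i j ij a, of u]
  show ?case
    unfolding e P_def[symmetric]
  proof (intro conjI)
    show "(sig i \<circ> sig j) u = (\<lambda>m. v m - (\<Sum>q<Suc l. snd (P q)) * ee j m -
        (\<Sum>q<Suc l. fst (P q) - a * snd (P q)) * ee i m)"
      unfolding st(1) by (simp add: fun_eq_iff IH1 IH(2,3) algebra_simps)
    show "fl i ((sig i \<circ> sig j) u) = fst (P (Suc l))"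
      unfolding st(2) PS by (simp add: IH(2,3) dihF_def)
    show "fl j ((sig i \<circ> sig j) u) = snd (P (Suc l))"
      unfolding st(3) PS by (simp add: IH(2,3) dihF_def)
  qed
qed

lemma dih_pow_id:
  assumes i: "i < n" and j: "j < n" and ij: "i \<noteq> j" and a: "Acoef i j = a" "Acoef j i = a"
    and sums: "\<And>x y. (\<Sum>q<k. fst ((dihF a ^^ q) (x, y))) = 0 \<and> (\<Sum>q<k. snd ((dihF a ^^ q) (x, y))) = 0"
  shows "((sig i \<circ> sig j) ^^ k) = id"
proof
  fix v
  note it = dih_iter[OF i j ij a, of k v]
  have s1: "(\<Sum>q<k. snd ((dihF a ^^ q) (fl i v, fl j v))) = 0" using sums by blast
  have s2: "(\<Sum>q<k. fst ((dihF a ^^ q) (fl i v, fl j v)) - a * snd ((dihF a ^^ q) (fl i v, fl j v))) = 0"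
    using sums[of "fl i v" "fl j v"] by (simp add: sum_subtractf sum_distrib_left[symmetric])
  show "((sig i \<circ> sig j) ^^ k) v = id v" using it s1 s2 by simp
qed

lemma dihF_rec:
  "fst ((dihF a ^^ (l + 2)) p) = (a * a - 2) * fst ((dihF a ^^ (l + 1)) p) - fst ((dihF a ^^ l) p)
   \<and> snd ((dihF a ^^ (l + 2)) p) = (a * a - 2) * snd ((dihF a ^^ (l + 1)) p) - snd ((dihF a ^^ l) p)"
proof -
  obtain x y where xy: "(dihF a ^^ l) p = (x, y)" by fastforce
  have "(dihF a ^^ (l + 1)) p = dihF a (x, y)" using xy by simp
  moreover have "(dihF a ^^ (l + 2)) p = dihF a (dihF a (x, y))" using xy by (simp add: numeral_2_eq_2)
  ultimately show ?thesis using xy by (simp add: dihF_def algebra_simps)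
qed

lemma M_sym: "i < n \<Longrightarrow> j < n \<Longrightarrow> M i j = M j i"
  using cm by (simp add: coxeter_matrix_def)

lemma relator_evw: "r \<in> RC \<Longrightarrow> evw r = id"
proof -
  assume "r \<in> RC"
  then obtain i j k where r: "r = concat (replicate k [(i, True), (j, True)])" "i < n" "j < n" "M i j = enat k"
    unfolding coxeter_relators_def by blast
  have ev: "evw r = (sig i \<circ> sig j) ^^ k" unfolding r(1)
    by (induction k) (simp_all add: evw_append o_def)
  show ?thesis
  proof (cases "i = j")
    case True
    then have "k = 1" using r cm by (simp add: coxeter_matrix_def one_enat_def)
    then show ?thesis using ev True r(2) by (auto simp: fun_eq_iff sig_sig)
  next
    case False
    have "2 \<le> M i j" using cm r(2,3) False by (simp add: coxeter_matrix_def)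
    then have k2: "k \<ge> 2" using r(4) by (simp add: numeral_eq_enat)
    have Mji: "M j i = enat k" using r M_sym by simp
    define a where "a = - 2 * cos (pi / real k)"
    have a: "Acoef i j = a" "Acoef j i = a" using False r(4) Mji by (auto simp: Acoef_def a_def)
    have sums: "(\<Sum>q<k. fst ((dihF a ^^ q) (x, y))) = 0 \<and> (\<Sum>q<k. snd ((dihF a ^^ q) (x, y))) = 0" for x y
    proof (cases "k = 2")
      case True
      then have "a = 0" by (simp add: a_def)
      then show ?thesis using True by (simp add: numeral_2_eq_2 dihF_def)
    next
      case False
      then have k3: "k \<ge> 3" using k2 by simp
      have c: "a * a - 2 = 2 * cos (2 * pi / real k)"
      proof -
        have "cos (2 * (pi / real k)) = 2 * cos (pi / real k) ^ 2 - 1" by (rule cos_double_cos)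
        then show ?thesis by (simp add: a_def power2_eq_square algebra_simps)
      qed
      show ?thesis
        using cheb_sum_zero[OF k3, of "\<lambda>q. fst ((dihF a ^^ q) (x, y))"]
              cheb_sum_zero[OF k3, of "\<lambda>q. snd ((dihF a ^^ q) (x, y))"]
              dihF_rec[where a=a] c by simp
    qed
    show ?thesis using ev dih_pow_id[OF r(2) r(3) False a sums] by simp
  qed
qed

lemma pres_rel_evw: "pres_rel XC RC u v \<Longrightarrow> evw u = evw v"
proof (induction rule: pres_rel.induct)
  case (pr_cancel a u b v)
  then show ?case by (auto simp: evw_append fun_eq_iff sig_sig)
next
  case (pr_relator r u v)
  then show ?case by (simp add: evw_append relator_evw)
qed auto

definition Rho :: "(nat \<times> bool) list set \<Rightarrow> (nat \<Rightarrow> real) \<Rightarrow> (nat \<Rightarrow> real)" where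
  "Rho C = evw (SOME w. w \<in> C)"

lemma Rho_class: "Rho (pres_class XC RC w) = evw w"
proof -
  have "(SOME w'. w' \<in> pres_class XC RC w) \<in> pres_class XC RC w" by (rule someI, rule pres_class_mem)
  then have "pres_rel XC RC w (SOME w'. w' \<in> pres_class XC RC w)" by (simp add: pres_class_def)
  then show ?thesis unfolding Rho_def by (simp add: pres_rel_evw)
qed

lemma Rho_mult: "x \<in> carrier W \<Longrightarrow> y \<in> carrier W \<Longrightarrow> Rho (x \<otimes>\<^bsub>W\<^esub> y) = Rho x \<circ> Rho y"
  by (auto simp: W_def' pres_carrier pres_mult_class Rho_class evw_append)

lemma Rho_one: "Rho \<one>\<^bsub>W\<^esub> = id"
  by (simp add: W_one Rho_class)

lemma Rho_T: "t \<in> T \<Longrightarrow> \<exists>u. \<forall>v. Rho t v - v \<in> FV.span {u}"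
proof -
  assume "t \<in> T"
  then obtain g i where g: "g \<in> carrier W" "i < n" "t = g \<otimes>\<^bsub>W\<^esub> sg i \<otimes>\<^bsub>W\<^esub> inv\<^bsub>W\<^esub> g"
    unfolding cox_T_def cox_S_def by auto
  obtain w where w: "g = pres_class XC RC w" "set w \<subseteq> XC \<times> UNIV" using g(1) by (auto simp: W_def' pres_carrier)
  have ig: "inv\<^bsub>W\<^esub> g = pres_class XC RC (word_inv w)" using w by (simp add: W_def' pres_inv_class)
  have tc: "t = pres_class XC RC (w @ [(i, True)] @ word_inv w)"
    using g(3) ig w(1) by (simp add: sg_def' W_mult)
  have inv: "evw w (evw (word_inv w) v) = v" for v
  proof -
    have "evw (w @ word_inv w) = evw []" by (rule pres_rel_evw, rule pres_inv_cancel'[OF w(2)])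
    then show ?thesis by (simp add: evw_append fun_eq_iff)
  qed
  show ?thesis
  proof (intro exI allI)
    fix v
    let ?x = "evw (word_inv w) v"
    have "Rho t v = evw w (sig i ?x)" by (simp add: tc Rho_class evw_append)
    also have "sig i ?x = (\<lambda>m. ?x m - fl i ?x * ee i m)" by (simp add: sig_def)
    also have "evw w \<dots> = (\<lambda>m. 1 * v m + (- fl i ?x) * evw w (ee i) m)" by (simp add: evw_sub inv)
    finally have "Rho t v - v = sc (- fl i ?x) (evw w (ee i))" by (simp add: sc_def fun_eq_iff)
    then show "Rho t v - v \<in> FV.span {evw w (ee i)}" by (metis FV.span_base FV.span_scale insertI1)
  qed
qed

lemma Rho_prod_span: "set ts \<subseteq> T \<Longrightarrow> \<exists>us. length us = length ts \<and> (\<forall>v. Rho (cprod ts) v - v \<in> FV.span (set us))"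
proof (induction ts)
  case Nil
  have z: "Rho (cprod []) v - v = 0" for v by (simp add: Rho_one fun_eq_iff zero_fun_def)
  show ?case
  proof (intro exI[of _ "[]"] conjI allI)
    fix v show "Rho (cprod []) v - v \<in> FV.span (set [])" unfolding z by (rule FV.span_zero)
  qed simp
next
  case (Cons t ts)
  have "set ts \<subseteq> T" using Cons.prems by simp
  then obtain us where us: "length us = length ts" "\<forall>v. Rho (cprod ts) v - v \<in> FV.span (set us)"
    using Cons.IH by blast
  have "t \<in> T" using Cons.prems by simp
  then obtain u where u: "\<forall>v. Rho t v - v \<in> FV.span {u}" using Rho_T by blast
  have tC: "t \<in> carrier W" using Cons T_carrier by auto
  have pC: "cprod ts \<in> carrier W" using Cons by (intro cprod_carrier T_subset_carrier) auto
  show ?case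
  proof (intro exI conjI allI)
    show "length (u # us) = length (t # ts)" using us by simp
    fix v
    let ?y = "Rho (cprod ts) v"
    have "Rho (cprod (t # ts)) v - v = (Rho t ?y - ?y) + (?y - v)"
      using tC pC by (simp add: Rho_mult)
    moreover have "Rho t ?y - ?y \<in> FV.span (set (u # us))"
      using u FV.span_mono[of "{u}" "set (u # us)"] by auto
    moreover have "?y - v \<in> FV.span (set (u # us))"
      using us(2) FV.span_mono[of "set us" "set (u # us)"] by auto
    ultimately show "Rho (cprod (t # ts)) v - v \<in> FV.span (set (u # us))"
      by (metis FV.span_add)
  qed
qed

end


context cox
begin

abbreviation "hc \<equiv> cox_elem n M"

definition compL :: "nat list \<Rightarrow> (nat \<Rightarrow> real) \<Rightarrow> (nat \<Rightarrow> real)" where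
  "compL L = foldr (\<lambda>i f. sig i \<circ> f) L id"

lemma compL_Nil[simp]: "compL [] = id" by (simp add: compL_def)
lemma compL_Cons[simp]: "compL (i # L) = sig i \<circ> compL L" by (simp add: compL_def)
lemma compL_append: "compL (A @ B) = compL A \<circ> compL B" by (induction A) auto

lemma Rho_sg: "i < n \<Longrightarrow> Rho (sg i) = sig i"
  by (simp add: sg_def' Rho_class)

lemma Rho_cprod_sg: "set L \<subseteq> {..<n} \<Longrightarrow> Rho (cprod (map sg L)) = compL L"
proof (induction L)
  case Nil then show ?case by (simp add: Rho_one)
next
  case (Cons i L)
  have "cprod (map sg L) \<in> carrier W" using Cons by (intro cprod_carrier) auto
  then show ?case using Cons by (simp add: Rho_mult Rho_sg)
qed

lemma compL_outside: "m \<notin> set L \<Longrightarrow> compL L v m = v m"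
  by (induction L arbitrary: v) (auto simp: sig_only)

lemma compL_fix: "set L \<subseteq> {..<n} \<Longrightarrow> l \<notin> set L \<Longrightarrow> compL L (ee (n + l)) = ee (n + l)"
proof (induction L)
  case Nil then show ?case by simp
next
  case (Cons i L)
  then have i: "i < n" "i \<noteq> l" by auto
  have "sig i (ee (n + l)) = ee (n + l)"
    using fl_ee_n[OF i(1), of l] i by (simp add: sig_def)
  then show ?case using Cons by simp
qed

definition dvec :: "nat \<Rightarrow> nat \<Rightarrow> real" where
  "dvec l = ee (n + l) - Rho hc (ee (n + l))"

lemma hc_def': "hc = cprod (map sg [0..<n])" by (simp add: cox_elem_def cox_prod_def)

lemma hc_carrier: "hc \<in> carrier W"
  unfolding hc_def' by (intro cprod_carrier) auto

lemma dvec_val: "l < n \<Longrightarrow> l \<le> m \<Longrightarrow> dvec l m = ee l m"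
proof -
  assume l: "l < n" "l \<le> m"
  have s1: "[0..<n] = [0..<l] @ [l..<n]" using upt_add_eq_append[of 0 l "n - l"] l by simp
  have s2: "[l..<n] = l # [Suc l..<n]" using l by (simp add: upt_conv_Cons)
  have split: "[0..<n] = [0..<l] @ l # [Suc l..<n]" using s1 s2 by simp
  have "Rho hc = compL [0..<n]" unfolding hc_def' by (rule Rho_cprod_sg) auto
  then have "Rho hc (ee (n + l)) = compL [0..<l] (sig l (compL [Suc l..<n] (ee (n + l))))"
    by (simp add: split compL_append)
  also have "compL [Suc l..<n] (ee (n + l)) = ee (n + l)" by (rule compL_fix) auto
  finally have "Rho hc (ee (n + l)) m = sig l (ee (n + l)) m"
    using l by (simp add: compL_outside)
  also have "\<dots> = ee (n + l) m - ee l m" using fl_ee_n[OF l(1), of l] by (simp add: sig_def)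
  finally show ?thesis by (simp add: dvec_def)
qed

lemma span_zero_above:
  assumes k: "k \<le> n"
  shows "FV.span (dvec ` {..<k}) \<subseteq> {v. \<forall>m\<ge>k. v m = 0}"
proof (rule FV.span_minimal)
  show "dvec ` {..<k} \<subseteq> {v. \<forall>m\<ge>k. v m = 0}"
    using k by (auto simp: dvec_val ee_def)
  show "FV.subspace {v. \<forall>m\<ge>k. v m = 0}"
    by (auto simp: FV.subspace_def sc_def)
qed

lemma dvec_indep: "k \<le> n \<Longrightarrow> FV.independent (dvec ` {..<k})"
proof (induction k)
  case 0 then show ?case by (simp add: FV.independent_empty)
next
  case (Suc k)
  have "dvec k \<notin> FV.span (dvec ` {..<k})"
  proof
    assume "dvec k \<in> FV.span (dvec ` {..<k})"
    then have "dvec k k = 0" using span_zero_above[of k] Suc.prems by auto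
    moreover have "dvec k k = 1" using Suc.prems by (simp add: dvec_val ee_def)
    ultimately show False by simp
  qed
  then have "FV.independent (insert (dvec k) (dvec ` {..<k}))"
    using Suc by (intro FV.independent_insertI) auto
  moreover have "dvec ` {..<Suc k} = insert (dvec k) (dvec ` {..<k})"
    by (simp add: lessThan_Suc)
  ultimately show ?case by simp
qed

lemma dvec_inj: "inj_on dvec {..<n}"
proof (rule inj_onI)
  fix l l' assume l: "l \<in> {..<n}" "l' \<in> {..<n}" "dvec l = dvec l'"
  show "l = l'"
  proof (rule ccontr)
    assume ne: "l \<noteq> l'"
    show False
    proof (cases "l < l'")
      case True
      have a1: "dvec l l' = 0" using l(1) True by (simp add: dvec_val ee_def)
      have a2: "dvec l' l' = 1" using l(2) by (simp add: dvec_val ee_def)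
      show False using a1 a2 l(3) by simp
    next
      case False
      then have "l' < l" using ne by simp
      have a1: "dvec l' l = 0" using l(2) \<open>l' < l\<close> by (simp add: dvec_val ee_def)
      have a2: "dvec l l = 1" using l(1) by (simp add: dvec_val ee_def)
      show False using a1 a2 l(3) by simp
    qed
  qed
qed

lemma T_prod_h_length: "set ts \<subseteq> T \<Longrightarrow> cprod ts = hc \<Longrightarrow> n \<le> length ts"
proof -
  assume ts: "set ts \<subseteq> T" "cprod ts = hc"
  obtain us where us: "length us = length ts" "\<forall>v. Rho hc v - v \<in> FV.span (set us)"
    using Rho_prod_span[OF ts(1)] ts(2) by auto
  have "dvec ` {..<n} \<subseteq> FV.span (set us)"
  proof
    fix x assume "x \<in> dvec ` {..<n}"
    then obtain l where x: "x = dvec l" by auto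
    have "Rho hc (ee (n + l)) - ee (n + l) \<in> FV.span (set us)" using us by blast
    then have "- (Rho hc (ee (n + l)) - ee (n + l)) \<in> FV.span (set us)" by (rule FV.span_neg)
    then show "x \<in> FV.span (set us)" by (simp add: x dvec_def)
  qed
  then have "card (dvec ` {..<n}) \<le> card (set us)"
    using FV.independent_span_bound[of "set us" "dvec ` {..<n}"] dvec_indep[of n] by auto
  moreover have "card (dvec ` {..<n}) = n" using dvec_inj by (simp add: card_image)
  moreover have "card (set us) \<le> length us" by (rule card_length)
  ultimately show ?thesis using us by simp
qed

lemma RL_h: "RL hc = n"
proof (rule antisym)
  have "set (map sg [0..<n]) \<subseteq> T" using sg_T by auto
  then show "RL hc \<le> n" using RL_le[of "map sg [0..<n]" hc] by (simp add: hc_def')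
  obtain ts where "set ts \<subseteq> T" "length ts = RL hc" "cprod ts = hc" using RL_ex[OF hc_carrier] by blast
  then show "n \<le> RL hc" using T_prod_h_length by metis
qed

end


context cox
begin

abbreviation "DX \<equiv> dual_gens n M"
abbreviation "DR \<equiv> dual_relators n M"
abbreviation "DG \<equiv> dual_artin_group n M"
abbreviation "NC \<equiv> nc_interval n M"

definition gD :: "(nat \<times> bool) list set \<Rightarrow> ((nat \<times> bool) list set \<times> bool) list set" where
  "gD t = pres_class DX DR [(t, True)]"

lemma DG_def': "DG = presented_group DX DR" by (simp add: dual_artin_group_def)

sublocale D: group DG by (simp add: DG_def' pres_group)

lemma gD_carrier: "t \<in> DX \<Longrightarrow> gD t \<in> carrier DG"
  by (simp add: gD_def DG_def' pres_class_in_carrier)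

definition good :: "(nat \<times> bool) list set list \<Rightarrow> bool" where
  "good ts \<longleftrightarrow> length ts = n \<and> set ts \<subseteq> T \<and> cprod ts = hc"

lemma RL_split:
  assumes x: "x \<in> carrier W" and y: "y \<in> carrier W" and h: "x \<otimes>\<^bsub>W\<^esub> y = hc"
    and px: "RL x \<le> p" and qy: "RL y \<le> q" and pq: "p + q = n"
  shows "RL x = p" "RL y = q" "T_le n M x hc"
proof -
  have "n \<le> RL x + RL y" using RL_mult[OF x y] h RL_h by simp
  then show rx: "RL x = p" and ry: "RL y = q" using px qy pq by auto
  have "inv\<^bsub>W\<^esub> x \<otimes>\<^bsub>W\<^esub> hc = y" using h x y by (simp flip: h)
  then show "T_le n M x hc" unfolding T_le_def using rx ry pq RL_h by simp
qed

lemma good_single: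
  assumes g: "good ts" and i: "i < n"
  shows "ts ! i \<in> DX" "RL (ts ! i) = 1"
proof -
  have ts: "set ts \<subseteq> T" "length ts = n" "cprod ts = hc" using g by (auto simp: good_def)
  let ?a = "ts ! i"
  have a: "?a \<in> T" using ts i by auto
  have aC: "?a \<in> carrier W" using a T_carrier by blast
  have E: "set (extr ts i) \<subseteq> T" "length (extr ts i) = n - 1" using extr_T extr_length ts i by auto
  have EC: "cprod (extr ts i) \<in> carrier W" using E by (intro cprod_carrier T_subset_carrier)
  have h: "?a \<otimes>\<^bsub>W\<^esub> cprod (extr ts i) = hc" using extr_prod[of ts i] ts i by simp
  have ra: "RL ?a \<le> 1" using RL_le[of "[?a]" ?a] a aC by simp
  have re: "RL (cprod (extr ts i)) \<le> n - 1" using RL_le[OF E(1)] E by simp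
  note R = RL_split[OF aC EC h ra re]
  show "RL ?a = 1" using R i by simp
  show "?a \<in> DX" unfolding dual_gens_def nc_interval_def using a aC R i by simp
qed

lemma good_pair:
  assumes g: "good ts" and ij: "i < j" "j < n"
  shows "RL (ts ! i \<otimes>\<^bsub>W\<^esub> ts ! j) = 2" "ts ! i \<otimes>\<^bsub>W\<^esub> ts ! j \<in> NC"
proof -
  have ts: "set ts \<subseteq> T" "length ts = n" "cprod ts = hc" using g by (auto simp: good_def)
  let ?a = "ts ! i" let ?b = "ts ! j"
  let ?E1 = "extr ts i" let ?E2 = "extr (extr ts i) (j - 1)"
  have a: "?a \<in> T" using ts ij by auto
  have b: "?b \<in> T" using ts ij by auto
  have aC: "?a \<in> carrier W" using a T_carrier by blast
  have bC: "?b \<in> carrier W" using b T_carrier by blast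
  have E1: "set ?E1 \<subseteq> T" "length ?E1 = n - 1" using extr_T extr_length ts ij by auto
  have E2: "set ?E2 \<subseteq> T" "length ?E2 = n - 2" using extr_T[OF E1(1)] extr_length[of "j - 1" ?E1] E1 ij by auto
  have E1b: "?E1 ! (j - 1) = ?b" using extr_nth ij ts by simp
  have h1: "hc = ?a \<otimes>\<^bsub>W\<^esub> cprod ?E1" using extr_prod[of ts i] ts ij by simp
  have h2: "cprod ?E1 = ?b \<otimes>\<^bsub>W\<^esub> cprod ?E2" using extr_prod[OF E1(1), of "j - 1"] E1 ij E1b by simp
  have E2C: "cprod ?E2 \<in> carrier W" using E2 by (intro cprod_carrier T_subset_carrier)
  have h: "(?a \<otimes>\<^bsub>W\<^esub> ?b) \<otimes>\<^bsub>W\<^esub> cprod ?E2 = hc" using h1 h2 aC bC E2C by (simp add: W.m_assoc)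
  have rab: "RL (?a \<otimes>\<^bsub>W\<^esub> ?b) \<le> 2" using RL_le[of "[?a, ?b]" "?a \<otimes>\<^bsub>W\<^esub> ?b"] a b bC by simp
  have re: "RL (cprod ?E2) \<le> n - 2" using RL_le[OF E2(1)] E2 by simp
  note R = RL_split[OF W.m_closed[OF aC bC] E2C h rab re]
  show "RL (?a \<otimes>\<^bsub>W\<^esub> ?b) = 2" using R ij by simp
  show "?a \<otimes>\<^bsub>W\<^esub> ?b \<in> NC" unfolding nc_interval_def using R ij aC bC by simp
qed

lemma red_pair:
  assumes "x \<in> T" "y \<in> T" "RL c = 2" "x \<otimes>\<^bsub>W\<^esub> y = c"
  shows "[x, y] \<in> red_T n M c"
  using assms T_carrier unfolding red_T_def by simp

lemma dual_rel2:
  assumes c: "c \<in> NC" and r1: "[x, y] \<in> red_T n M c" and r2: "[x', y'] \<in> red_T n M c"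
    and x: "x \<in> DX" "y \<in> DX" and x': "x' \<in> DX" "y' \<in> DX"
  shows "gD x \<otimes>\<^bsub>DG\<^esub> gD y = gD x' \<otimes>\<^bsub>DG\<^esub> gD y'"
proof -
  have "eq_relator (pos_word [x, y]) (pos_word [x', y']) \<in> DR"
    unfolding dual_relators_def using c r1 r2 by blast
  then have "pres_rel DX DR (pos_word [x, y]) (pos_word [x', y'])"
    by (rule eq_relator_rel) (use x' in \<open>auto simp: pos_word_def\<close>)
  then show ?thesis by (simp add: gD_def DG_def' pres_mult_class pres_class_eq_iff pos_word_def)
qed

lemma cprod_update2:
  assumes i: "i + 1 < length ts" and ts: "set ts \<subseteq> carrier W" and xy: "x \<in> carrier W" "y \<in> carrier W"
    and e: "x \<otimes>\<^bsub>W\<^esub> y = ts ! i \<otimes>\<^bsub>W\<^esub> ts ! (i + 1)"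
  shows "cprod (ts[i := x, i + 1 := y]) = cprod ts"
proof -
  have d: "ts = take i ts @ [ts ! i, ts ! (i + 1)] @ drop (i + 2) ts" using i
    by (metis Cons_nth_drop_Suc Suc_eq_plus1 add_2_eq_Suc' add_lessD1 append_Cons append_Nil append_take_drop_id)
  have u: "ts[i := x, i + 1 := y] = take i ts @ [x, y] @ drop (i + 2) ts" using i
    by (subst d) (simp add: list_update_append nth_append min_def)
  have P: "set (take i ts) \<subseteq> carrier W" "set (drop (i + 2) ts) \<subseteq> carrier W"
    using ts by (auto dest: in_set_takeD in_set_dropD)
  have ab: "ts ! i \<in> carrier W" "ts ! (i + 1) \<in> carrier W" using ts i by auto
  have PC: "cprod (take i ts) \<in> carrier W" "cprod (drop (i + 2) ts) \<in> carrier W"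
    using P by (auto intro: cprod_carrier)
  have "cprod (ts[i := x, i + 1 := y]) = cprod (take i ts) \<otimes>\<^bsub>W\<^esub> ((x \<otimes>\<^bsub>W\<^esub> y) \<otimes>\<^bsub>W\<^esub> cprod (drop (i + 2) ts))"
    unfolding u using P xy PC by (simp add: cprod_append W.m_assoc)
  also have "\<dots> = cprod (take i ts) \<otimes>\<^bsub>W\<^esub> ((ts ! i \<otimes>\<^bsub>W\<^esub> ts ! (i + 1)) \<otimes>\<^bsub>W\<^esub> cprod (drop (i + 2) ts))"
    by (simp add: e)
  also have "\<dots> = cprod ts"
    by (subst (3) d) (use P ab PC in \<open>simp add: cprod_append W.m_assoc\<close>)
  finally show ?thesis .
qed

lemma hurwitz_good:
  assumes g: "good ts" and i: "i + 1 < n"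
  shows "good (hurwitz_gen W (i, b) ts)"
proof -
  have ts: "set ts \<subseteq> T" "length ts = n" "cprod ts = hc" using g by (auto simp: good_def)
  let ?a = "ts ! i" let ?b = "ts ! (i + 1)"
  have a: "?a \<in> T" "?b \<in> T" using ts i by auto
  have aC: "?a \<in> carrier W" "?b \<in> carrier W" using a T_carrier by auto
  have tsC: "set ts \<subseteq> carrier W" using ts T_subset_carrier by blast
  show ?thesis
  proof (cases b)
    case True
    let ?x = "?a \<otimes>\<^bsub>W\<^esub> ?b \<otimes>\<^bsub>W\<^esub> inv\<^bsub>W\<^esub> ?a"
    have x: "?x \<in> T" using T_conj[OF a(2) aC(1)] by simp
    have xC: "?x \<in> carrier W" using x T_carrier by blast
    have e: "?x \<otimes>\<^bsub>W\<^esub> ?a = ?a \<otimes>\<^bsub>W\<^esub> ?b" using aC by (simp add: W.m_assoc)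
    have h: "hurwitz_gen W (i, b) ts = ts[i := ?x, i + 1 := ?a]" using True by (simp add: hurwitz_gen_def)
    have "set (ts[i := ?x, i + 1 := ?a]) \<subseteq> T"
      using ts x a by (auto dest!: set_update_subset_insert[THEN subsetD])
    then show ?thesis unfolding h good_def
      using cprod_update2[of i ts ?x ?a] ts i tsC xC aC e by simp
  next
    case False
    let ?y = "inv\<^bsub>W\<^esub> ?b \<otimes>\<^bsub>W\<^esub> ?a \<otimes>\<^bsub>W\<^esub> ?b"
    have y: "?y \<in> T" using T_conj[OF a(1) W.inv_closed[OF aC(2)]] aC by simp
    have yC: "?y \<in> carrier W" using y T_carrier by blast
    have e: "?b \<otimes>\<^bsub>W\<^esub> ?y = ?a \<otimes>\<^bsub>W\<^esub> ?b" using aC by (simp add: W.m_assoc)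
    have h: "hurwitz_gen W (i, b) ts = ts[i := ?b, i + 1 := ?y]" using False by (simp add: hurwitz_gen_def)
    have "set (ts[i := ?b, i + 1 := ?y]) \<subseteq> T"
      using ts y a by (auto dest!: set_update_subset_insert[THEN subsetD])
    then show ?thesis unfolding h good_def
      using cprod_update2[of i ts ?b ?y] ts i tsC yC aC e by simp
  qed
qed

end


lemma hurwitz_word_Cons[simp]: "hurwitz_word G (x # w) gs = hurwitz_gen G x (hurwitz_word G w gs)"
  by (simp add: hurwitz_word_def)

lemma hurwitz_word_Nil[simp]: "hurwitz_word G [] gs = gs"
  by (simp add: hurwitz_word_def)

lemma length_hurwitz_gen[simp]: "length (hurwitz_gen G x gs) = length gs"
  by (simp add: hurwitz_gen_def split: prod.splits)

context cox
begin

lemma Dc1[simp]: "x \<in> carrier DG \<Longrightarrow> y \<in> carrier DG \<Longrightarrow> inv\<^bsub>DG\<^esub> x \<otimes>\<^bsub>DG\<^esub> (x \<otimes>\<^bsub>DG\<^esub> y) = y"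
  by (simp flip: D.m_assoc)

lemma hurwitz_dual_step:
  assumes g: "good ts" and i: "i + 1 < n"
  shows "hurwitz_gen DG (i, b) (map gD ts) = map gD (hurwitz_gen W (i, b) ts)"
proof -
  have ts: "set ts \<subseteq> T" "length ts = n" "cprod ts = hc" using g by (auto simp: good_def)
  let ?a = "ts ! i" let ?b = "ts ! (i + 1)"
  have a: "?a \<in> T" "?b \<in> T" using ts i by auto
  have aC: "?a \<in> carrier W" "?b \<in> carrier W" using a T_carrier by auto
  have aD: "?a \<in> DX" "?b \<in> DX" using good_single[OF g] i by auto
  have GC: "gD ?a \<in> carrier DG" "gD ?b \<in> carrier DG" using aD gD_carrier by auto
  have c: "RL (?a \<otimes>\<^bsub>W\<^esub> ?b) = 2" "?a \<otimes>\<^bsub>W\<^esub> ?b \<in> NC" using good_pair[OF g, of i "i + 1"] i by auto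
  have rab: "[?a, ?b] \<in> red_T n M (?a \<otimes>\<^bsub>W\<^esub> ?b)" using red_pair a c by simp
  have ng: "good (hurwitz_gen W (i, b) ts)" by (rule hurwitz_good[OF g i])
  have mi: "map gD ts ! i = gD ?a" "map gD ts ! (i + 1) = gD ?b" using ts i by auto
  show ?thesis
  proof (cases b)
    case True
    let ?x = "?a \<otimes>\<^bsub>W\<^esub> ?b \<otimes>\<^bsub>W\<^esub> inv\<^bsub>W\<^esub> ?a"
    have h: "hurwitz_gen W (i, b) ts = ts[i := ?x, i + 1 := ?a]" using True by (simp add: hurwitz_gen_def)
    have x: "?x \<in> T" using T_conj[OF a(2) aC(1)] by simp
    have xD: "?x \<in> DX" using good_single(1)[OF ng, of i] i ts by (simp add: h nth_list_update)
    have e: "?x \<otimes>\<^bsub>W\<^esub> ?a = ?a \<otimes>\<^bsub>W\<^esub> ?b" using aC by (simp add: W.m_assoc)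
    have rxa: "[?x, ?a] \<in> red_T n M (?a \<otimes>\<^bsub>W\<^esub> ?b)" using red_pair x a c e by simp
    have rel: "gD ?a \<otimes>\<^bsub>DG\<^esub> gD ?b = gD ?x \<otimes>\<^bsub>DG\<^esub> gD ?a"
      by (rule dual_rel2[OF c(2) rab rxa aD xD aD(1)])
    have "gD ?a \<otimes>\<^bsub>DG\<^esub> gD ?b \<otimes>\<^bsub>DG\<^esub> inv\<^bsub>DG\<^esub> gD ?a = gD ?x"
      using rel GC gD_carrier[OF xD] by (simp add: D.m_assoc)
    then show ?thesis using True ts i by (simp add: h hurwitz_gen_def mi map_update)
  next
    case False
    let ?y = "inv\<^bsub>W\<^esub> ?b \<otimes>\<^bsub>W\<^esub> ?a \<otimes>\<^bsub>W\<^esub> ?b"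
    have h: "hurwitz_gen W (i, b) ts = ts[i := ?b, i + 1 := ?y]" using False by (simp add: hurwitz_gen_def)
    have y: "?y \<in> T" using T_conj[OF a(1) W.inv_closed[OF aC(2)]] aC by simp
    have yD: "?y \<in> DX" using good_single(1)[OF ng, of "i + 1"] i ts by (simp add: h nth_list_update)
    have e: "?b \<otimes>\<^bsub>W\<^esub> ?y = ?a \<otimes>\<^bsub>W\<^esub> ?b" using aC by (simp add: W.m_assoc)
    have rby: "[?b, ?y] \<in> red_T n M (?a \<otimes>\<^bsub>W\<^esub> ?b)" using red_pair y a c e by simp
    have rel: "gD ?a \<otimes>\<^bsub>DG\<^esub> gD ?b = gD ?b \<otimes>\<^bsub>DG\<^esub> gD ?y"
      by (rule dual_rel2[OF c(2) rab rby aD aD(2) yD])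
    have "inv\<^bsub>DG\<^esub> gD ?b \<otimes>\<^bsub>DG\<^esub> gD ?a \<otimes>\<^bsub>DG\<^esub> gD ?b = gD ?y"
      using rel GC gD_carrier[OF yD] by (simp add: D.m_assoc)
    then show ?thesis using False ts i by (simp add: h hurwitz_gen_def mi map_update)
  qed
qed

lemma orbit:
  assumes g: "good ts" and w: "set w \<subseteq> {..<n - 1} \<times> UNIV"
  shows "hurwitz_word DG w (map gD ts) = map gD (hurwitz_word W w ts) \<and> good (hurwitz_word W w ts)"
  using w
proof (induction w)
  case Nil then show ?case using g by simp
next
  case (Cons x w)
  obtain i b where x: "x = (i, b)" by fastforce
  have i: "i + 1 < n" using Cons.prems x by auto
  have IH: "hurwitz_word DG w (map gD ts) = map gD (hurwitz_word W w ts)" "good (hurwitz_word W w ts)"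
    using Cons by auto
  show ?case using hurwitz_dual_step[OF IH(2) i, of b] hurwitz_good[OF IH(2) i, of b] IH(1) x by simp
qed

end


definition gprod :: "('a, 'b) monoid_scheme \<Rightarrow> 'a list \<Rightarrow> 'a" where
  "gprod G xs = foldr (\<lambda>a b. a \<otimes>\<^bsub>G\<^esub> b) xs \<one>\<^bsub>G\<^esub>"

lemma gprod_Nil[simp]: "gprod G [] = \<one>\<^bsub>G\<^esub>" by (simp add: gprod_def)
lemma gprod_Cons[simp]: "gprod G (x # xs) = x \<otimes>\<^bsub>G\<^esub> gprod G xs" by (simp add: gprod_def)

lemma (in monoid) gprod_closed: "set xs \<subseteq> carrier G \<Longrightarrow> gprod G xs \<in> carrier G"
  by (induction xs) auto

lemma (in monoid) gprod_append:
  "set xs \<subseteq> carrier G \<Longrightarrow> set ys \<subseteq> carrier G \<Longrightarrow> gprod G (xs @ ys) = gprod G xs \<otimes> gprod G ys"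
  by (induction xs) (auto simp: m_assoc gprod_closed)

lemma (in monoid) altp_Suc:
  assumes "x \<in> carrier G" "y \<in> carrier G"
  shows "gprod G (map (\<lambda>l. if even l then x else y) [0..<Suc m]) =
         gprod G (map (\<lambda>l. if even l then x else y) [0..<m]) \<otimes> (if even m then x else y)"
proof -
  have "set (map (\<lambda>l. if even l then x else y) [0..<m]) \<subseteq> carrier G" using assms by auto
  then show ?thesis using assms by (simp add: gprod_append)
qed

lemma (in monoid) altp_even:
  assumes "x \<in> carrier G" "y \<in> carrier G"
  shows "gprod G (map (\<lambda>l. if even l then x else y) [0..<2 * p]) = (x \<otimes> y) [^] p"
proof (induction p)
  case 0 then show ?case by simp
next
  case (Suc p)
  have e: "2 * Suc p = Suc (Suc (2 * p))" by simp
  show ?case unfolding e using assms Suc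
    by (simp only: altp_Suc[OF assms]) (simp add: m_assoc)
qed

lemma (in monoid) altp_odd:
  assumes "x \<in> carrier G" "y \<in> carrier G"
  shows "gprod G (map (\<lambda>l. if even l then x else y) [0..<Suc (2 * p)]) = (x \<otimes> y) [^] p \<otimes> x"
  using altp_Suc[OF assms, of "2 * p"] altp_even[OF assms, of p] by simp

lemma (in group) pow_swap:
  assumes x: "x \<in> carrier G" and y: "y \<in> carrier G"
  shows "(y \<otimes> x) [^] (Suc q) = y \<otimes> (x \<otimes> y) [^] q \<otimes> x"
proof (induction q)
  case 0 then show ?case using x y by simp
next
  case (Suc q)
  have "(y \<otimes> x) [^] Suc (Suc q) = (y \<otimes> (x \<otimes> y) [^] q \<otimes> x) \<otimes> (y \<otimes> x)"
    by (simp only: nat_pow_Suc[of "y \<otimes> x" "Suc q"] Suc)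
  also have "\<dots> = y \<otimes> ((x \<otimes> y) [^] q \<otimes> (x \<otimes> y)) \<otimes> x" using x y by (simp add: m_assoc)
  finally show ?case by simp
qed

lemma (in group) pow_swap2:
  assumes x: "x \<in> carrier G" and y: "y \<in> carrier G"
  shows "(y \<otimes> x) [^] (p::nat) \<otimes> y = y \<otimes> (x \<otimes> y) [^] p"
proof (induction p)
  case 0 then show ?case using x y by simp
next
  case (Suc p)
  have "(y \<otimes> x) [^] Suc p \<otimes> y = (y \<otimes> (x \<otimes> y) [^] p \<otimes> x) \<otimes> y"
    by (simp only: pow_swap[OF x y])
  also have "\<dots> = y \<otimes> ((x \<otimes> y) [^] p \<otimes> (x \<otimes> y))" using x y by (simp add: m_assoc)
  finally show ?case by simp
qed

lemma alt_word_length[simp]: "length (alt_word i j k) = k"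
  by (simp add: alt_word_def)

lemma alt_word_nth: "l < k \<Longrightarrow> alt_word i j k ! l = (if even l then i else j)"
  by (simp add: alt_word_def)

lemma alt_word_rev: "alt_word i j k @ rev (alt_word j i k) = alt_word i j (2 * k)"
proof (rule nth_equalityI)
  show "length (alt_word i j k @ rev (alt_word j i k)) = length (alt_word i j (2 * k))" by simp
  fix p assume "p < length (alt_word i j k @ rev (alt_word j i k))"
  then have p: "p < 2 * k" by simp
  show "(alt_word i j k @ rev (alt_word j i k)) ! p = alt_word i j (2 * k) ! p"
  proof (cases "p < k")
    case True then show ?thesis using p by (simp add: nth_append alt_word_nth)
  next
    case False
    then have "(alt_word i j k @ rev (alt_word j i k)) ! p = alt_word j i k ! (k - 1 - (p - k))"
      using p by (simp add: nth_append rev_nth)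
    also have "\<dots> = (if even (k - 1 - (p - k)) then j else i)" using p False by (simp add: alt_word_nth)
    also have "even (k - 1 - (p - k)) \<longleftrightarrow> odd p" using p False by presburger
    finally show ?thesis using p by (simp add: alt_word_nth)
  qed
qed

lemma alt_word_SS: "alt_word i j (Suc (Suc m)) = i # j # alt_word i j m"
  by (rule nth_equalityI) (auto simp: alt_word_nth nth_Cons split: nat.splits)

lemma alt_word_concat: "alt_word i j (2 * k) = concat (replicate k [i, j])"
proof (induction k)
  case 0 then show ?case by (simp add: alt_word_def)
next
  case (Suc k)
  have "2 * Suc k = Suc (Suc (2 * k))" by simp
  then show ?case using Suc by (simp add: alt_word_SS)
qed

lemma lmap_id: "lmap id w = w"
  by (induction w) (auto simp: lmap_def)

lemma map_fst_word_inv: "map fst (word_inv w) = rev (map fst w)"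
  by (simp add: word_inv_def rev_map case_prod_beta comp_def)

context cox
begin

abbreviation "RA \<equiv> artin_relators n M"

lemma word_class_fst: "set w \<subseteq> XC \<times> UNIV \<Longrightarrow> pres_class XC RC w = cprod (map sg (map fst w))"
proof -
  assume w: "set w \<subseteq> XC \<times> UNIV"
  have "(\<lambda>(i, b). sg i) = sg \<circ> fst" by auto
  then show ?thesis using word_class_prod[OF w] by (metis map_map)
qed

lemma artin_rel_cox: "r \<in> RA \<Longrightarrow> pres_rel XC RC r []"
proof -
  assume "r \<in> RA"
  then obtain i j k where r: "r = eq_relator (pos_word (alt_word i j k)) (pos_word (alt_word j i k))"
    "i < j" "j < n" "M i j = enat k"
    unfolding artin_relators_def by blast
  let ?rr = "concat (replicate k [(i, True), (j, True)])"
  have "i < n" using r by simp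
  then have rrR: "?rr \<in> RC" unfolding coxeter_relators_def using r by blast
  have set_r: "set r \<subseteq> XC \<times> UNIV" using r(1-3)
    by (auto simp: eq_relator_def pos_word_def word_inv_def alt_word_def)
  have set_rr: "set ?rr \<subseteq> XC \<times> UNIV" using r(2,3) by auto
  have "map fst r = alt_word i j k @ rev (alt_word j i k)"
    using r(1) by (simp add: eq_relator_def map_fst_word_inv pos_word_def comp_def)
  also have "\<dots> = map fst ?rr" by (simp add: alt_word_rev alt_word_concat map_concat)
  finally have "pres_class XC RC r = pres_class XC RC ?rr"
    using word_class_fst[OF set_r] word_class_fst[OF set_rr] by simp
  also have "\<dots> = pres_class XC RC []" using relator_triv[OF rrR] by (simp add: pres_class_eq_iff)
  finally show ?thesis by (simp add: pres_class_eq_iff)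
qed

lemma art_to_cox: "pres_rel XC RA u v \<Longrightarrow> pres_rel XC RC u v"
proof (induction rule: pres_rel.induct)
  case (pr_refl w) then show ?case by (rule pres_rel.pr_refl)
next
  case (pr_sym u v) then show ?case by (blast intro: pres_rel.pr_sym)
next
  case (pr_trans u v w) then show ?case by (blast intro: pres_rel.pr_trans)
next
  case (pr_cancel a u b v) then show ?case by (rule pres_rel.pr_cancel)
next
  case (pr_relator r u v)
  have "pres_rel XC RC (u @ r @ v) (u @ [] @ v)" by (rule pres_rel_cong[OF artin_rel_cox[OF pr_relator]])
  then show ?case by simp
qed

end


context cox
begin

abbreviation "sts \<equiv> map sg [0..<n]"

lemma good_sts: "good sts"
  unfolding good_def using sg_T by (auto simp: hc_def')

lemma sg_DX: "i < n \<Longrightarrow> sg i \<in> DX"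
  using good_single(1)[OF good_sts, of i] by simp

lemma class_pos_word: "pres_class DX DR (pos_word ts) = gprod DG (map gD ts)"
proof (induction ts)
  case Nil then show ?case by (simp add: pos_word_def DG_def' pres_one)
next
  case (Cons a ts)
  have "pres_class DX DR (pos_word (a # ts)) = pres_class DX DR [(a, True)] \<otimes>\<^bsub>DG\<^esub> pres_class DX DR (pos_word ts)"
    by (simp add: DG_def' pres_mult_class pos_word_def)
  then show ?case using Cons by (simp add: gD_def)
qed

context
  fixes i j k
  assumes ij: "i < j" "j < n" and Mk: "M i j = enat k"
begin

abbreviation "cc \<equiv> sg i \<otimes>\<^bsub>W\<^esub> sg j"

lemma i_n: "i < n" using ij by simp

lemma cc_C: "cc \<in> carrier W" using ij by simp

lemma cc_props: "RL cc = 2" "cc \<in> NC"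
  using good_pair[OF good_sts ij] ij by auto

lemma concat_rep_snoc: "concat (replicate m xs) @ xs = concat (replicate (Suc m) xs)"
  by (induction m) auto

lemma cc_pow: "cc [^]\<^bsub>W\<^esub> k = \<one>\<^bsub>W\<^esub>"
proof -
  have ccl: "cc = pres_class XC RC [(i, True), (j, True)]" by (simp add: sg_def' W_mult)
  have p: "cc [^]\<^bsub>W\<^esub> m = pres_class XC RC (concat (replicate m [(i, True), (j, True)]))" for m
  proof (induction m)
    case 0 then show ?case by (simp add: W_one)
  next
    case (Suc m) then show ?case by (simp add: ccl W_mult concat_rep_snoc)
  qed
  have "concat (replicate k [(i, True), (j, True)]) \<in> RC"
    unfolding coxeter_relators_def using ij Mk i_n by blast
  then show ?thesis using p[of k] relator_triv by (simp add: W_one pres_class_eq_iff)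
qed

definition rr :: "nat \<Rightarrow> (nat \<times> bool) list set" where
  "rr l = sg i \<otimes>\<^bsub>W\<^esub> cc [^]\<^bsub>W\<^esub> l"

lemma rr_C: "rr l \<in> carrier W" using ij cc_C by (simp add: rr_def)

lemma rr_Suc: "rr (Suc l) = rr l \<otimes>\<^bsub>W\<^esub> cc"
  using ij cc_C by (simp add: rr_def W.m_assoc)

lemma rr_0: "rr 0 = sg i" using ij by (simp add: rr_def)

lemma rr_1: "rr 1 = sg j"
  using ij rr_Suc[of 0] by (simp add: rr_0 flip: W.m_assoc) (simp add: sg_sq)

lemma rr_T: "rr l \<in> T \<and> rr (Suc l) \<in> T"
proof (induction l)
  case 0 then show ?case using ij rr_1 by (simp add: rr_0 sg_T)
next
  case (Suc l)
  have "rr (Suc (Suc l)) = rr (Suc l) \<otimes>\<^bsub>W\<^esub> (rr l \<otimes>\<^bsub>W\<^esub> rr (Suc l))"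
    using Suc rr_C cc_C by (simp add: rr_Suc[of "Suc l"] rr_Suc[of l])
  also have "\<dots> = rr (Suc l) \<otimes>\<^bsub>W\<^esub> rr l \<otimes>\<^bsub>W\<^esub> rr (Suc l)" using rr_C by (simp add: W.m_assoc)
  finally have "rr (Suc (Suc l)) \<in> T" using T_conj' Suc by simp
  then show ?case using Suc by simp
qed

lemma rr_prod: "rr l \<otimes>\<^bsub>W\<^esub> rr (Suc l) = cc"
  using rr_T[of l] cc_C by (simp add: rr_Suc)

lemma rr_period: "rr (l + k) = rr l"
  using cc_C ij by (simp add: rr_def W.nat_pow_mult[symmetric] cc_pow W.m_assoc)

lemma rr_DX: "rr l \<in> DX"
proof -
  have T1: "rr l \<in> T" "rr (Suc l) \<in> T" using rr_T by auto
  have ich: "inv\<^bsub>W\<^esub> cc \<otimes>\<^bsub>W\<^esub> hc \<in> carrier W" using cc_C hc_carrier by simp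
  have Tl: "T_le n M cc hc" using cc_props(2) by (simp add: nc_interval_def)
  then have rc: "RL (inv\<^bsub>W\<^esub> cc \<otimes>\<^bsub>W\<^esub> hc) = n - 2" using cc_props(1) RL_h by (simp add: T_le_def)
  let ?y = "rr (Suc l) \<otimes>\<^bsub>W\<^esub> (inv\<^bsub>W\<^esub> cc \<otimes>\<^bsub>W\<^esub> hc)"
  have yC: "?y \<in> carrier W" using rr_C ich by simp
  have h: "rr l \<otimes>\<^bsub>W\<^esub> ?y = hc"
    using rr_C cc_C hc_carrier rr_prod[of l] by (simp flip: W.m_assoc)
  have rx: "RL (rr l) \<le> 1" using RL_le[of "[rr l]" "rr l"] T1 rr_C by simp
  have r1: "RL (rr (Suc l)) \<le> 1" using RL_le[of "[rr (Suc l)]"] T1 rr_C by simp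
  have ry: "RL ?y \<le> n - 1" using RL_mult[OF rr_C[of "Suc l"] ich] r1 rc ij by simp
  note R = RL_split[OF rr_C yC h rx ry]
  show ?thesis using R T1 rr_C ij unfolding dual_gens_def nc_interval_def by simp
qed

lemma rr_red: "[rr l, rr (Suc l)] \<in> red_T n M cc"
  using red_pair rr_T cc_props rr_prod by simp

definition GG :: "nat \<Rightarrow> ((nat \<times> bool) list set \<times> bool) list set" where
  "GG l = gD (rr l)"

abbreviation "Cd \<equiv> GG 0 \<otimes>\<^bsub>DG\<^esub> GG 1"

lemma GG_C: "GG l \<in> carrier DG" by (simp add: GG_def gD_carrier rr_DX)

lemma GG_rel: "GG l \<otimes>\<^bsub>DG\<^esub> GG (Suc l) = Cd"
  unfolding GG_def One_nat_def
  by (rule dual_rel2[OF cc_props(2) rr_red rr_red rr_DX rr_DX rr_DX rr_DX])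

lemma Cd_C: "Cd \<in> carrier DG" using GG_C by simp

lemma GG_shift1: "GG l \<otimes>\<^bsub>DG\<^esub> Cd = Cd \<otimes>\<^bsub>DG\<^esub> GG (l + 2)"
proof -
  have "GG l \<otimes>\<^bsub>DG\<^esub> Cd = GG l \<otimes>\<^bsub>DG\<^esub> (GG (Suc l) \<otimes>\<^bsub>DG\<^esub> GG (Suc (Suc l)))"
    by (simp only: GG_rel)
  also have "\<dots> = (GG l \<otimes>\<^bsub>DG\<^esub> GG (Suc l)) \<otimes>\<^bsub>DG\<^esub> GG (Suc (Suc l))"
    using GG_C by (simp add: D.m_assoc)
  also have "\<dots> = Cd \<otimes>\<^bsub>DG\<^esub> GG (l + 2)" by (simp only: GG_rel) simp
  finally show ?thesis .
qed

lemma GG_shift: "GG l \<otimes>\<^bsub>DG\<^esub> Cd [^]\<^bsub>DG\<^esub> p = Cd [^]\<^bsub>DG\<^esub> p \<otimes>\<^bsub>DG\<^esub> GG (l + 2 * p)"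
proof (induction p arbitrary: l)
  case 0 then show ?case using GG_C by simp
next
  case (Suc p)
  have e: "Cd [^]\<^bsub>DG\<^esub> Suc p = Cd \<otimes>\<^bsub>DG\<^esub> Cd [^]\<^bsub>DG\<^esub> p" by (rule D.nat_pow_Suc2[OF Cd_C])
  have "GG l \<otimes>\<^bsub>DG\<^esub> Cd [^]\<^bsub>DG\<^esub> Suc p = GG l \<otimes>\<^bsub>DG\<^esub> (Cd \<otimes>\<^bsub>DG\<^esub> Cd [^]\<^bsub>DG\<^esub> p)"
    by (simp only: e)
  also have "\<dots> = (GG l \<otimes>\<^bsub>DG\<^esub> Cd) \<otimes>\<^bsub>DG\<^esub> Cd [^]\<^bsub>DG\<^esub> p"
    using GG_C Cd_C by (simp add: D.m_assoc)
  also have "\<dots> = Cd \<otimes>\<^bsub>DG\<^esub> (GG (l + 2) \<otimes>\<^bsub>DG\<^esub> Cd [^]\<^bsub>DG\<^esub> p)"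
    unfolding GG_shift1 using GG_C Cd_C by (simp add: D.m_assoc)
  also have "\<dots> = Cd \<otimes>\<^bsub>DG\<^esub> (Cd [^]\<^bsub>DG\<^esub> p \<otimes>\<^bsub>DG\<^esub> GG (l + 2 + 2 * p))" by (simp only: Suc)
  also have "\<dots> = (Cd \<otimes>\<^bsub>DG\<^esub> Cd [^]\<^bsub>DG\<^esub> p) \<otimes>\<^bsub>DG\<^esub> GG (l + 2 * Suc p)"
    using GG_C Cd_C by (simp add: D.m_assoc add.assoc)
  also have "\<dots> = Cd [^]\<^bsub>DG\<^esub> Suc p \<otimes>\<^bsub>DG\<^esub> GG (l + 2 * Suc p)" by (simp only: e)
  finally show ?case .
qed

lemma GG_period: "GG (l + k) = GG l" by (simp add: GG_def rr_period)

lemma k2: "k \<ge> 2"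
proof -
  have "2 \<le> M i j" using cm ij by (simp add: coxeter_matrix_def)
  then show ?thesis using Mk by (simp add: numeral_eq_enat)
qed

lemma dihedral_GG:
  "gprod DG (map (\<lambda>l. if even l then GG 0 else GG 1) [0..<k]) =
   gprod DG (map (\<lambda>l. if even l then GG 1 else GG 0) [0..<k])"
proof (cases "even k")
  case True
  then obtain q where q: "k = 2 * Suc q" using k2
    by (metis Suc_pred dvd_def gr0I mult_0_right not_numeral_le_zero)
  have L: "gprod DG (map (\<lambda>l. if even l then GG 0 else GG 1) [0..<k]) = Cd [^]\<^bsub>DG\<^esub> Suc q"
    unfolding q by (rule D.altp_even[OF GG_C GG_C])
  have B1: "gprod DG (map (\<lambda>l. if even l then GG 1 else GG 0) [0..<k]) = (GG 1 \<otimes>\<^bsub>DG\<^esub> GG 0) [^]\<^bsub>DG\<^esub> Suc q"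
    unfolding q by (rule D.altp_even[OF GG_C GG_C])
  have B2: "(GG 1 \<otimes>\<^bsub>DG\<^esub> GG 0) [^]\<^bsub>DG\<^esub> Suc q = GG 1 \<otimes>\<^bsub>DG\<^esub> Cd [^]\<^bsub>DG\<^esub> q \<otimes>\<^bsub>DG\<^esub> GG 0"
    by (rule D.pow_swap[OF GG_C GG_C])
  have g0: "GG 0 = GG (2 + 2 * q)" using GG_period[of 0] q by simp
  have sh: "Cd [^]\<^bsub>DG\<^esub> q \<otimes>\<^bsub>DG\<^esub> GG (2 + 2 * q) = GG 2 \<otimes>\<^bsub>DG\<^esub> Cd [^]\<^bsub>DG\<^esub> q"
    using GG_shift[of 2 q] by (rule sym)
  have r12: "GG 1 \<otimes>\<^bsub>DG\<^esub> GG 2 = Cd" using GG_rel[of 1] by (simp add: numeral_2_eq_2)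
  have PC: "Cd [^]\<^bsub>DG\<^esub> q \<in> carrier DG" using Cd_C by simp
  have "GG 1 \<otimes>\<^bsub>DG\<^esub> Cd [^]\<^bsub>DG\<^esub> q \<otimes>\<^bsub>DG\<^esub> GG 0 = GG 1 \<otimes>\<^bsub>DG\<^esub> (Cd [^]\<^bsub>DG\<^esub> q \<otimes>\<^bsub>DG\<^esub> GG 0)"
    by (rule D.m_assoc[OF GG_C PC GG_C])
  also have "\<dots> = GG 1 \<otimes>\<^bsub>DG\<^esub> (GG 2 \<otimes>\<^bsub>DG\<^esub> Cd [^]\<^bsub>DG\<^esub> q)"
    by (simp only: sh[symmetric] g0[symmetric])
  also have "\<dots> = (GG 1 \<otimes>\<^bsub>DG\<^esub> GG 2) \<otimes>\<^bsub>DG\<^esub> Cd [^]\<^bsub>DG\<^esub> q"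
    by (rule D.m_assoc[OF GG_C GG_C PC, symmetric])
  also have "\<dots> = Cd [^]\<^bsub>DG\<^esub> Suc q"
    by (simp only: r12 D.nat_pow_Suc2[OF Cd_C])
  finally have X: "GG 1 \<otimes>\<^bsub>DG\<^esub> Cd [^]\<^bsub>DG\<^esub> q \<otimes>\<^bsub>DG\<^esub> GG 0 = Cd [^]\<^bsub>DG\<^esub> Suc q" .
  have R: "gprod DG (map (\<lambda>l. if even l then GG 1 else GG 0) [0..<k]) = Cd [^]\<^bsub>DG\<^esub> Suc q"
    by (rule trans[OF B1 trans[OF B2 X]])
  show ?thesis by (rule trans[OF L R[symmetric]])
next
  case False
  have "k = Suc (2 * (k div 2))" using False by presburger
  then obtain p where p: "k = Suc (2 * p)" by blast
  have L: "gprod DG (map (\<lambda>l. if even l then GG 0 else GG 1) [0..<k]) = Cd [^]\<^bsub>DG\<^esub> p \<otimes>\<^bsub>DG\<^esub> GG 0"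
    unfolding p by (rule D.altp_odd[OF GG_C GG_C])
  have B1: "gprod DG (map (\<lambda>l. if even l then GG 1 else GG 0) [0..<k]) = (GG 1 \<otimes>\<^bsub>DG\<^esub> GG 0) [^]\<^bsub>DG\<^esub> p \<otimes>\<^bsub>DG\<^esub> GG 1"
    unfolding p by (rule D.altp_odd[OF GG_C GG_C])
  have B2: "(GG 1 \<otimes>\<^bsub>DG\<^esub> GG 0) [^]\<^bsub>DG\<^esub> p \<otimes>\<^bsub>DG\<^esub> GG 1 = GG 1 \<otimes>\<^bsub>DG\<^esub> Cd [^]\<^bsub>DG\<^esub> p"
    by (rule D.pow_swap2[OF GG_C GG_C])
  have B3: "GG 1 \<otimes>\<^bsub>DG\<^esub> Cd [^]\<^bsub>DG\<^esub> p = Cd [^]\<^bsub>DG\<^esub> p \<otimes>\<^bsub>DG\<^esub> GG (1 + 2 * p)" by (rule GG_shift)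
  have g0: "GG (1 + 2 * p) = GG 0" using GG_period[of 0] p by simp
  have B4: "Cd [^]\<^bsub>DG\<^esub> p \<otimes>\<^bsub>DG\<^esub> GG (1 + 2 * p) = Cd [^]\<^bsub>DG\<^esub> p \<otimes>\<^bsub>DG\<^esub> GG 0"
    by (rule arg_cong[OF g0])
  have R: "gprod DG (map (\<lambda>l. if even l then GG 1 else GG 0) [0..<k]) = Cd [^]\<^bsub>DG\<^esub> p \<otimes>\<^bsub>DG\<^esub> GG 0"
    by (rule trans[OF B1 trans[OF B2 trans[OF B3 B4]]])
  show ?thesis by (rule trans[OF L R[symmetric]])
qed

lemma artin_rel_dual_ij:
  "pres_rel DX DR (lmap sg (eq_relator (pos_word (alt_word i j k)) (pos_word (alt_word j i k)))) []"
proof -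
  have sgi: "sg i \<in> DX" "sg j \<in> DX" using sg_DX ij by auto
  have G01: "GG 0 = gD (sg i)" "GG 1 = gD (sg j)" unfolding GG_def rr_0 rr_1 by simp_all
  have lm: "lmap sg (pos_word xs) = pos_word (map sg xs)" for xs
    by (simp add: lmap_def pos_word_def)
  have mp: "map gD (map sg (alt_word a b k)) = map (\<lambda>l. if even l then gD (sg a) else gD (sg b)) [0..<k]" for a b
    by (simp add: alt_word_def)
  let ?p = "pos_word (map sg (alt_word i j k))" let ?q = "pos_word (map sg (alt_word j i k))"
  have qX: "set ?q \<subseteq> DX \<times> UNIV" using sgi by (auto simp: pos_word_def alt_word_def)
  have eq: "pres_class DX DR ?p = pres_class DX DR ?q"
    unfolding class_pos_word mp using dihedral_GG[unfolded G01] by simp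
  have "pres_class DX DR (?p @ word_inv ?q) = pres_class DX DR ?p \<otimes>\<^bsub>DG\<^esub> inv\<^bsub>DG\<^esub> pres_class DX DR ?q"
    using qX by (simp add: DG_def' pres_mult_class pres_inv_class)
  also have "\<dots> = \<one>\<^bsub>DG\<^esub>"
  proof -
    have qC: "pres_class DX DR ?q \<in> carrier DG" using pres_class_in_carrier[OF qX] by (simp add: DG_def')
    show ?thesis unfolding eq using qC by simp
  qed
  also have "\<dots> = pres_class DX DR []" by (simp add: DG_def' pres_one)
  finally have X: "pres_class DX DR (?p @ word_inv ?q) = pres_class DX DR []" .
  have L: "lmap sg (eq_relator (pos_word (alt_word i j k)) (pos_word (alt_word j i k))) = ?p @ word_inv ?q"
    by (simp only: eq_relator_def lmap_append lm lmap_word_inv)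
  show ?thesis unfolding L using X by (simp only: pres_class_eq_iff)
qed

end

end


lemma length_hurwitz_word[simp]: "length (hurwitz_word G w gs) = length gs"
  by (induction w) auto

lemma hurwitz_hom:
  assumes GH: "group G" "group H" and f: "f \<in> hom G H" and gs: "set gs \<subseteq> carrier G"
    and w: "set w \<subseteq> {..<length gs - 1} \<times> UNIV"
  shows "map f (hurwitz_word G w gs) = hurwitz_word H w (map f gs) \<and> set (hurwitz_word G w gs) \<subseteq> carrier G"
  using w
proof (induction w)
  case Nil then show ?case using gs by simp
next
  case (Cons x w)
  interpret group_hom G H f using GH f by (simp add: group_hom_def group_hom_axioms_def)
  obtain i b where x: "x = (i, b)" by fastforce
  let ?g = "hurwitz_word G w gs"
  have i: "i + 1 < length ?g" using Cons.prems x by auto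
  have IH: "map f ?g = hurwitz_word H w (map f gs)" "set ?g \<subseteq> carrier G" using Cons by auto
  have c: "?g ! i \<in> carrier G" "?g ! (i + 1) \<in> carrier G" using IH(2) i by auto
  have m: "map f ?g ! i = f (?g ! i)" "map f ?g ! (i + 1) = f (?g ! (i + 1))" using i by auto
  show ?case
  proof (cases b)
    case True
    have "set (hurwitz_gen G (i, b) ?g) \<subseteq> carrier G"
      using True IH(2) c by (auto simp: hurwitz_gen_def dest!: set_update_subset_insert[THEN subsetD])
    moreover have "map f (hurwitz_gen G (i, b) ?g) = hurwitz_gen H (i, b) (map f ?g)"
      using True c i by (simp add: hurwitz_gen_def map_update)
    ultimately show ?thesis using IH x by simp
  next
    case False
    have "set (hurwitz_gen G (i, b) ?g) \<subseteq> carrier G"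
      using False IH(2) c by (auto simp: hurwitz_gen_def dest!: set_update_subset_insert[THEN subsetD])
    moreover have "map f (hurwitz_gen G (i, b) ?g) = hurwitz_gen H (i, b) (map f ?g)"
      using False c i by (simp add: hurwitz_gen_def map_update)
    ultimately show ?thesis using IH x by simp
  qed
qed

context cox
begin

abbreviation "AG \<equiv> artin_group n M"

lemma AG_def': "AG = presented_group XC RA" by (simp add: artin_group_def)

lemma ag_def': "art_gen n M i = pres_class XC RA [(i, True)]"
  by (simp add: art_gen_def pres_gen_def)

lemma art_to_dual: "pres_rel XC RA u v \<Longrightarrow> pres_rel DX DR (lmap sg u) (lmap sg v)"
proof (induction rule: pres_rel.induct)
  case (pr_refl w) then show ?case by (rule pres_rel.pr_refl)
next
  case (pr_sym u v) then show ?case by (blast intro: pres_rel.pr_sym)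
next
  case (pr_trans u v w) then show ?case by (blast intro: pres_rel.pr_trans)
next
  case (pr_cancel a u b v)
  have "pres_rel DX DR (lmap sg u @ [(sg a, b), (sg a, \<not> b)] @ lmap sg v) (lmap sg u @ lmap sg v)"
    using pr_cancel sg_DX by (intro pres_rel.pr_cancel) auto
  then show ?case by (simp add: lmap_def)
next
  case (pr_relator r u v)
  then obtain i j k where r: "r = eq_relator (pos_word (alt_word i j k)) (pos_word (alt_word j i k))"
    "i < j" "j < n" "M i j = enat k"
    unfolding artin_relators_def by blast
  have "pres_rel DX DR (lmap sg r) []" using artin_rel_dual_ij[OF r(2,3,4)] r(1) by simp
  then have "pres_rel DX DR (lmap sg u @ lmap sg r @ lmap sg v) (lmap sg u @ [] @ lmap sg v)"
    by (rule pres_rel_cong)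
  then show ?case by simp
qed

lemma psi_eq: "dual_psi n M = (\<lambda>C. pres_class DX DR (lmap sg (SOME w. w \<in> C)))"
  by (simp add: dual_psi_def lmap_def fun_eq_iff)

lemma psi_gen: "i < n \<Longrightarrow> dual_psi n M (art_gen n M i) = gD (sg i)"
proof -
  assume i: "i < n"
  have "sg ` XC \<subseteq> DX" using sg_DX by auto
  note ih = induced_hom(1)[of XC RA DX DR sg, OF art_to_dual this]
  have "dual_psi n M (pres_class XC RA [(i, True)]) = pres_class DX DR (lmap sg [(i, True)])"
    using ih[of "[(i, True)]"] by (simp add: psi_eq)
  then show ?thesis by (simp add: ag_def' lmap_def gD_def)
qed

definition piA :: "(nat \<times> bool) list set \<Rightarrow> (nat \<times> bool) list set" where
  "piA = (\<lambda>C. pres_class XC RC (lmap id (SOME w. w \<in> C)))"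

lemma piA_props: "piA \<in> hom AG W" "\<And>u. piA (pres_class XC RA u) = pres_class XC RC (lmap id u)"
proof -
  have rel: "\<And>u v. pres_rel XC RA u v \<Longrightarrow> pres_rel XC RC (lmap id u) (lmap id v)"
    by (simp add: lmap_id art_to_cox)
  have "id ` XC \<subseteq> XC" by simp
  note ih = induced_hom[of XC RA XC RC id, OF rel this]
  show "piA \<in> hom AG W" using ih(2) unfolding piA_def by (simp add: AG_def' W_def')
  show "\<And>u. piA (pres_class XC RA u) = pres_class XC RC (lmap id u)" using ih(1) unfolding piA_def .
qed

lemma piA_gen: "piA (art_gen n M i) = sg i"
  by (simp add: ag_def' piA_props(2) lmap_id sg_def')

lemma AG_group: "group AG" by (simp add: AG_def' pres_group)

lemma ag_carrier: "i < n \<Longrightarrow> art_gen n M i \<in> carrier AG"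
  by (simp add: ag_def' AG_def' pres_class_in_carrier)

end

lemma braid_word:
  assumes "\<beta> \<in> carrier (braid_group n)"
  shows "(SOME w. w \<in> \<beta>) \<in> \<beta> \<and> set (SOME w. w \<in> \<beta>) \<subseteq> {..<n - 1} \<times> UNIV"
proof -
  obtain w where w: "\<beta> = pres_class {..<n - 1} (braid_relators n) w" "set w \<subseteq> {..<n - 1} \<times> UNIV"
    using assms by (auto simp: braid_group_def pres_carrier)
  have some: "(SOME w. w \<in> \<beta>) \<in> \<beta>" by (rule someI[of "\<lambda>x. x \<in> \<beta>" w]) (simp add: w(1) pres_class_mem)
  then have rel: "pres_rel {..<n - 1} (braid_relators n) w (SOME w. w \<in> \<beta>)"
    using w(1) by (simp add: pres_class_def)
  have R: "\<And>r. r \<in> braid_relators n \<Longrightarrow> set r \<subseteq> {..<n - 1} \<times> UNIV"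
    by (auto simp: braid_relators_def eq_relator_def pos_word_def word_inv_def)
  show ?thesis using some pres_rel_wf[OF rel R] w(2) by blast
qed


theorem proposition3p8:
  fixes n :: nat and M :: "nat \<Rightarrow> nat \<Rightarrow> enat"
  assumes "coxeter_matrix n M"
    and "dual_psi n M \<in> iso (artin_group n M) (dual_artin_group n M)"
  shows "well_stabilized n M"
proof -
  interpret cox n M by unfold_locales (rule assms(1))
  let ?sa = "map (art_gen n M) [0..<n]"
  let ?Psi = "dual_psi n M"
  have saC: "set ?sa \<subseteq> carrier AG" using ag_carrier by auto
  have stsC: "set sts \<subseteq> carrier W" by auto
  have pisa: "map piA ?sa = sts" by (simp add: piA_gen)
  have psisa: "map ?Psi ?sa = map gD sts" by (simp add: psi_gen)
  have Psi_hom: "?Psi \<in> hom AG DG" and Psi_inj: "inj_on ?Psi (carrier AG)"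
    using assms(2) by (auto simp: iso_def bij_betw_def)
  have key: "hurwitz_act W \<beta> sts = sts \<longleftrightarrow> hurwitz_act AG \<beta> ?sa = ?sa"
    if \<beta>: "\<beta> \<in> carrier (braid_group n)" for \<beta>
  proof -
    define w0 where "w0 = (SOME w. w \<in> \<beta>)"
    have w0: "set w0 \<subseteq> {..<n - 1} \<times> UNIV" using braid_word[OF \<beta>] by (simp add: w0_def)
    have w0': "set w0 \<subseteq> {..<length ?sa - 1} \<times> UNIV" using w0 by simp
    have actW: "hurwitz_act W \<beta> sts = hurwitz_word W w0 sts" by (simp add: hurwitz_act_def w0_def)
    have actA: "hurwitz_act AG \<beta> ?sa = hurwitz_word AG w0 ?sa" by (simp add: hurwitz_act_def w0_def)
    note hA = hurwitz_hom[OF AG_group W.is_group piA_props(1) saC w0']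
    note hD = hurwitz_hom[OF AG_group D.is_group Psi_hom saC w0']
    note orb = orbit[OF good_sts w0]
    show ?thesis unfolding actW actA
    proof
      assume st: "hurwitz_word W w0 sts = sts"
      have "map ?Psi (hurwitz_word AG w0 ?sa) = hurwitz_word DG w0 (map ?Psi ?sa)" using hD by blast
      also have "\<dots> = hurwitz_word DG w0 (map gD sts)" by (simp only: psisa)
      also have "\<dots> = map gD (hurwitz_word W w0 sts)" using orb by blast
      also have "\<dots> = map gD sts" by (simp only: st)
      also have "\<dots> = map ?Psi ?sa" by (simp only: psisa)
      finally have "map ?Psi (hurwitz_word AG w0 ?sa) = map ?Psi ?sa" .
      moreover have "inj_on ?Psi (set (hurwitz_word AG w0 ?sa) \<union> set ?sa)"
        using Psi_inj hD saC by (auto intro: inj_on_subset)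
      ultimately show "hurwitz_word AG w0 ?sa = ?sa" using inj_on_map_eq_map by metis
    next
      assume st: "hurwitz_word AG w0 ?sa = ?sa"
      have "hurwitz_word W w0 sts = hurwitz_word W w0 (map piA ?sa)" by (simp only: pisa)
      also have "\<dots> = map piA (hurwitz_word AG w0 ?sa)" using hA by (metis (no_types))
      also have "\<dots> = sts" by (simp only: st pisa)
      finally show "hurwitz_word W w0 sts = sts" .
    qed
  qed
  show ?thesis
    unfolding well_stabilized_def braid_stabilizer_def
    using key by blast
qed


end
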